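(* Let $C$ be a nontrivial group and let $A_1,B_1,A_2,B_2$ be $C$-groups with $A_1\cap B_1=A_2\cap B_2=C$ (the designated copy of $C$). If $\mathcal{F}_{\mathcal{L}_C}(A_1)\equiv\mathcal{F}_{\mathcal{L}_C}(A_2)$ and $\mathcal{F}_{\mathcal{L}_C}(B_1)\equiv\mathcal{F}_{\mathcal{L}_C}(B_2)$, then the amalgamated free products $A_1*_CB_1$ and $A_2*_CB_2$ are existentially equivalent in the language $\mathcal{L}_C$, and hence also in the language of groups.
   Context: The language $\mathcal{L}_C$ of $C$-groups has a constant symbol $d_c$ for each $c\in C$, a binary function $\cdot$, a unary function $^{-1}$ and a unary predicate $\delta$. A $C$-group is a group $H$ in this language satisfying all closed atomic formulas and negations of closed atomic formulas true in $C$ (so $c\mapsto d_c$ embeds $C$ as a subgroup, the designated copy of $C$), together with the axioms $d_c\in\delta$ and $\forall x(x\notin\delta\rightarrow x\neq d_c)$ for all $c\in C$. For $\mathcal{L}_C$-structures, an $\mathcal{L}_C$-isomorphism between subsets $S,T$ is a bijection $\phi:S\to T$ such that $\phi$ and $\phi^{-1}$ fix constants lying in the set, preserve $\delta$, and satisfy $\phi(f(s_1,\dots,s_n))=f(\phi(s_1),\dots,\phi(s_n))$ whenever the $s_i$ and $f(s_1,\dots,s_n)$ lie in $S$ (symmetrically for $\phi^{-1}$). $\mathcal{F}_{\mathcal{L}_C}(X)\equiv\mathcal{F}_{\mathcal{L}_C}(Y)$ means that every finite subset of $X$ is $\mathcal{L}_C$-isomorphic to a finite subset of $Y$ and vice versa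 (i.e. there is a bijection between isomorphism classes of finite subsets matching isomorphic ones). $A_i*_CB_i$ is regarded as a $C$-group via the common copy of $C$. *)

theory Defs
  imports "HOL-Algebra.Group"
begin

text \<open>A C-group: a group G with an injective homomorphism e : C -> G (the designated
copy of C). The constant d_c is interpreted as e c and the predicate delta as the
designated copy e ` carrier C.\<close>

definition is_cgroup :: "'c monoid \<Rightarrow> ('g, 'm) monoid_scheme \<Rightarrow> ('c \<Rightarrow> 'g) \<Rightarrow> bool" where
  "is_cgroup C G e \<longleftrightarrow> group G \<and> e \<in> hom C G \<and> inj_on e (carrier C)"

definition lc_pres ::
  "'c monoid \<Rightarrow> ('g, 'm1) monoid_scheme \<Rightarrow> ('c \<Rightarrow> 'g) \<Rightarrow>
   ('h, 'm2) monoid_scheme \<Rightarrow> ('c \<Rightarrow> 'h) \<Rightarrow> 'g set \<Rightarrow> ('g \<Rightarrow> 'h) \<Rightarrow> bool" where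
  "lc_pres C G e H e' S \<phi> \<longleftrightarrow>
     (\<forall>c \<in> carrier C. e c \<in> S \<longrightarrow> \<phi> (e c) = e' c) \<and>
     (\<forall>s \<in> S. s \<in> e ` carrier C \<longrightarrow> \<phi> s \<in> e' ` carrier C) \<and>
     (\<forall>s1 \<in> S. \<forall>s2 \<in> S. s1 \<otimes>\<^bsub>G\<^esub> s2 \<in> S \<longrightarrow> \<phi> (s1 \<otimes>\<^bsub>G\<^esub> s2) = \<phi> s1 \<otimes>\<^bsub>H\<^esub> \<phi> s2) \<and>
     (\<forall>s \<in> S. inv\<^bsub>G\<^esub> s \<in> S \<longrightarrow> \<phi> (inv\<^bsub>G\<^esub> s) = inv\<^bsub>H\<^esub> (\<phi> s))"

definition lc_iso ::
  "'c monoid \<Rightarrow> ('g, 'm1) monoid_scheme \<Rightarrow> ('c \<Rightarrow> 'g) \<Rightarrow>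
   ('h, 'm2) monoid_scheme \<Rightarrow> ('c \<Rightarrow> 'h) \<Rightarrow> 'g set \<Rightarrow> 'h set \<Rightarrow> ('g \<Rightarrow> 'h) \<Rightarrow> bool" where
  "lc_iso C G e H e' S T \<phi> \<longleftrightarrow>
     bij_betw \<phi> S T \<and> lc_pres C G e H e' S \<phi> \<and> lc_pres C H e' G e T (inv_into S \<phi>)"

text \<open>F_{L_C}(G) == F_{L_C}(H): every finite subset of G is L_C-isomorphic to a finite
subset of H and vice versa.\<close>

definition lc_fin_equiv ::
  "'c monoid \<Rightarrow> ('g, 'm1) monoid_scheme \<Rightarrow> ('c \<Rightarrow> 'g) \<Rightarrow>
   ('h, 'm2) monoid_scheme \<Rightarrow> ('c \<Rightarrow> 'h) \<Rightarrow> bool" where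
  "lc_fin_equiv C G e H e' \<longleftrightarrow>
     (\<forall>S. S \<subseteq> carrier G \<and> finite S \<longrightarrow>
        (\<exists>T \<phi>. T \<subseteq> carrier H \<and> finite T \<and> lc_iso C G e H e' S T \<phi>)) \<and>
     (\<forall>T. T \<subseteq> carrier H \<and> finite T \<longrightarrow>
        (\<exists>S \<psi>. S \<subseteq> carrier G \<and> finite S \<and> lc_iso C H e' G e T S \<psi>))"

text \<open>Since A and B share the designated copy of C as a common subset, the two copies of C
are identified.\<close>

inductive amal_rel :: "'a monoid \<Rightarrow> 'a monoid \<Rightarrow> 'a list \<Rightarrow> 'a list \<Rightarrow> bool"
  for A B :: "'a monoid" where
  amal_refl: "w \<in> lists (carrier A \<union> carrier B) \<Longrightarrow> amal_rel A B w w"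
| amal_sym: "amal_rel A B u v \<Longrightarrow> amal_rel A B v u"
| amal_trans: "amal_rel A B u v \<Longrightarrow> amal_rel A B v w \<Longrightarrow> amal_rel A B u w"
| amal_ctx: "amal_rel A B u v \<Longrightarrow> xs \<in> lists (carrier A \<union> carrier B) \<Longrightarrow>
     ys \<in> lists (carrier A \<union> carrier B) \<Longrightarrow> amal_rel A B (xs @ u @ ys) (xs @ v @ ys)"
| amal_multA: "a \<in> carrier A \<Longrightarrow> b \<in> carrier A \<Longrightarrow> amal_rel A B [a, b] [a \<otimes>\<^bsub>A\<^esub> b]"
| amal_multB: "a \<in> carrier B \<Longrightarrow> b \<in> carrier B \<Longrightarrow> amal_rel A B [a, b] [a \<otimes>\<^bsub>B\<^esub> b]"
| amal_oneA: "amal_rel A B [\<one>\<^bsub>A\<^esub>] []"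
| amal_oneB: "amal_rel A B [\<one>\<^bsub>B\<^esub>] []"

definition amal_prod :: "'a monoid \<Rightarrow> 'a monoid \<Rightarrow> 'a list set monoid" where
  "amal_prod A B =
     \<lparr> carrier = lists (carrier A \<union> carrier B) // {(u, v). amal_rel A B u v},
       mult = (\<lambda>X Y. {w. \<exists>u \<in> X. \<exists>v \<in> Y. amal_rel A B (u @ v) w}),
       one = {w. amal_rel A B [] w} \<rparr>"

definition amal_emb :: "'a monoid \<Rightarrow> 'a monoid \<Rightarrow> ('c \<Rightarrow> 'a) \<Rightarrow> 'c \<Rightarrow> 'a list set" where
  "amal_emb A B e c = {w. amal_rel A B [e c] w}"

datatype 'c lterm = LVar nat | LConst 'c | LMul "'c lterm" "'c lterm" | LInv "'c lterm"

datatype 'c lform = LEq "'c lterm" "'c lterm" | LDelta "'c lterm"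
  | LNot "'c lform" | LAnd "'c lform" "'c lform" | LOr "'c lform" "'c lform"

fun lterm_consts :: "'c lterm \<Rightarrow> 'c set" where
  "lterm_consts (LVar i) = {}"
| "lterm_consts (LConst c) = {c}"
| "lterm_consts (LMul s t) = lterm_consts s \<union> lterm_consts t"
| "lterm_consts (LInv t) = lterm_consts t"

fun lform_consts :: "'c lform \<Rightarrow> 'c set" where
  "lform_consts (LEq s t) = lterm_consts s \<union> lterm_consts t"
| "lform_consts (LDelta t) = lterm_consts t"
| "lform_consts (LNot f) = lform_consts f"
| "lform_consts (LAnd f g) = lform_consts f \<union> lform_consts g"
| "lform_consts (LOr f g) = lform_consts f \<union> lform_consts g"

fun lform_has_delta :: "'c lform \<Rightarrow> bool" where
  "lform_has_delta (LEq s t) = False"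
| "lform_has_delta (LDelta t) = True"
| "lform_has_delta (LNot f) = lform_has_delta f"
| "lform_has_delta (LAnd f g) = (lform_has_delta f \<or> lform_has_delta g)"
| "lform_has_delta (LOr f g) = (lform_has_delta f \<or> lform_has_delta g)"

definition is_lc_form :: "'c monoid \<Rightarrow> 'c lform \<Rightarrow> bool" where
  "is_lc_form C \<phi> \<longleftrightarrow> lform_consts \<phi> \<subseteq> carrier C"

definition is_group_form :: "'c lform \<Rightarrow> bool" where
  "is_group_form \<phi> \<longleftrightarrow> lform_consts \<phi> = {} \<and> \<not> lform_has_delta \<phi>"

fun teval :: "('g, 'm) monoid_scheme \<Rightarrow> ('c \<Rightarrow> 'g) \<Rightarrow> (nat \<Rightarrow> 'g) \<Rightarrow> 'c lterm \<Rightarrow> 'g" where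
  "teval G e \<sigma> (LVar i) = \<sigma> i"
| "teval G e \<sigma> (LConst c) = e c"
| "teval G e \<sigma> (LMul s t) = teval G e \<sigma> s \<otimes>\<^bsub>G\<^esub> teval G e \<sigma> t"
| "teval G e \<sigma> (LInv t) = inv\<^bsub>G\<^esub> (teval G e \<sigma> t)"

fun fsat :: "('g, 'm) monoid_scheme \<Rightarrow> ('c \<Rightarrow> 'g) \<Rightarrow> 'g set \<Rightarrow> (nat \<Rightarrow> 'g) \<Rightarrow> 'c lform \<Rightarrow> bool" where
  "fsat G e D \<sigma> (LEq s t) = (teval G e \<sigma> s = teval G e \<sigma> t)"
| "fsat G e D \<sigma> (LDelta t) = (teval G e \<sigma> t \<in> D)"
| "fsat G e D \<sigma> (LNot f) = (\<not> fsat G e D \<sigma> f)"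
| "fsat G e D \<sigma> (LAnd f g) = (fsat G e D \<sigma> f \<and> fsat G e D \<sigma> g)"
| "fsat G e D \<sigma> (LOr f g) = (fsat G e D \<sigma> f \<or> fsat G e D \<sigma> g)"

definition ex_holds :: "'c monoid \<Rightarrow> ('g, 'm) monoid_scheme \<Rightarrow> ('c \<Rightarrow> 'g) \<Rightarrow> 'c lform \<Rightarrow> bool" where
  "ex_holds C G e \<phi> \<longleftrightarrow> (\<exists>\<sigma>. (\<forall>i. \<sigma> i \<in> carrier G) \<and> fsat G e (e ` carrier C) \<sigma> \<phi>)"

definition lc_exist_equiv ::
  "'c monoid \<Rightarrow> ('g, 'm1) monoid_scheme \<Rightarrow> ('c \<Rightarrow> 'g) \<Rightarrow>
   ('h, 'm2) monoid_scheme \<Rightarrow> ('c \<Rightarrow> 'h) \<Rightarrow> bool" where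
  "lc_exist_equiv C G e H e' \<longleftrightarrow>
     (\<forall>\<phi>. is_lc_form C \<phi> \<longrightarrow> (ex_holds C G e \<phi> \<longleftrightarrow> ex_holds C H e' \<phi>))"

definition group_exist_equiv ::
  "'c monoid \<Rightarrow> ('g, 'm1) monoid_scheme \<Rightarrow> ('h, 'm2) monoid_scheme \<Rightarrow> bool" where
  "group_exist_equiv C G H \<longleftrightarrow>
     (\<forall>\<phi> :: 'c lform. is_group_form \<phi> \<longrightarrow>
        ((\<exists>\<sigma>. (\<forall>i. \<sigma> i \<in> carrier G) \<and> fsat G (\<lambda>_. undefined) {} \<sigma> \<phi>) \<longleftrightarrow>
         (\<exists>\<sigma>. (\<forall>i. \<sigma> i \<in> carrier H) \<and> fsat H (\<lambda>_. undefined) {} \<sigma> \<phi>)))"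

end

theory Submission
  imports Defs
begin


definition linv :: "'a monoid \<Rightarrow> 'a monoid \<Rightarrow> 'a \<Rightarrow> 'a" where
  "linv A B x = (if x \<in> carrier A then inv\<^bsub>A\<^esub> x else inv\<^bsub>B\<^esub> x)"

definition winv :: "'a monoid \<Rightarrow> 'a monoid \<Rightarrow> 'a list \<Rightarrow> 'a list" where
  "winv A B w = rev (map (linv A B) w)"

definition cls :: "'a monoid \<Rightarrow> 'a monoid \<Rightarrow> 'a list \<Rightarrow> 'a list set" where
  "cls A B w = {v. amal_rel A B w v}"

fun altw :: "'a monoid \<Rightarrow> 'a list \<Rightarrow> bool" where
  "altw A [] = True"
| "altw A [x] = True"
| "altw A (x # y # r) = ((x \<in> carrier A) \<noteq> (y \<in> carrier A) \<and> altw A (y # r))"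

definition nfalt :: "'a monoid \<Rightarrow> 'a monoid \<Rightarrow> 'a set \<Rightarrow> 'a list \<Rightarrow> bool" where
  "nfalt A B H r \<longleftrightarrow> r \<noteq> [] \<and> set r \<subseteq> (carrier A \<union> carrier B) - H \<and> altw A r"

fun wd :: "'a monoid \<Rightarrow> 'a monoid \<Rightarrow> ('c \<Rightarrow> 'a) \<Rightarrow> (nat \<Rightarrow> 'a list) \<Rightarrow> 'c lterm \<Rightarrow> 'a list" where
  "wd A B e ws (LVar i) = ws i"
| "wd A B e ws (LConst c) = [e c]"
| "wd A B e ws (LMul s t) = wd A B e ws s @ wd A B e ws t"
| "wd A B e ws (LInv t) = winv A B (wd A B e ws t)"

fun wsat :: "'c monoid \<Rightarrow> 'a monoid \<Rightarrow> 'a monoid \<Rightarrow> ('c \<Rightarrow> 'a) \<Rightarrow> (nat \<Rightarrow> 'a list) \<Rightarrow> 'c lform \<Rightarrow> bool" where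
  "wsat C A B e ws (LEq s t) = amal_rel A B (wd A B e ws s) (wd A B e ws t)"
| "wsat C A B e ws (LDelta t) = (\<exists>c\<in>carrier C. amal_rel A B (wd A B e ws t) [e c])"
| "wsat C A B e ws (LNot f) = (\<not> wsat C A B e ws f)"
| "wsat C A B e ws (LAnd f g) = (wsat C A B e ws f \<and> wsat C A B e ws g)"
| "wsat C A B e ws (LOr f g) = (wsat C A B e ws f \<or> wsat C A B e ws g)"

locale amal =
  fixes C :: "'c monoid" and A B :: "'a monoid" and e :: "'c \<Rightarrow> 'a"
  assumes grpC: "group C" and cgA: "is_cgroup C A e" and cgB: "is_cgroup C B e"
    and inter: "carrier A \<inter> carrier B = e ` carrier C"
begin

abbreviation "H \<equiv> e ` carrier C"
abbreviation "L \<equiv> lists (carrier A \<union> carrier B)"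
abbreviation "rel \<equiv> amal_rel A B"

lemma grpA: "group A" using cgA by (simp add: is_cgroup_def)
lemma grpB: "group B" using cgB by (simp add: is_cgroup_def)
lemma homA: "group_hom C A e" using cgA grpC by (simp add: is_cgroup_def group_hom_def group_hom_axioms_def)
lemma homB: "group_hom C B e" using cgB grpC by (simp add: is_cgroup_def group_hom_def group_hom_axioms_def)
lemma injA: "inj_on e (carrier C)" using cgA by (simp add: is_cgroup_def)

lemma subA: "subgroup H A" using homA group_hom.img_is_subgroup by blast
lemma subB: "subgroup H B" using homB group_hom.img_is_subgroup by blast
lemma HA: "H \<subseteq> carrier A" using inter by blast
lemma HB: "H \<subseteq> carrier B" using inter by blast

lemma oneA: "\<one>\<^bsub>A\<^esub> = e \<one>\<^bsub>C\<^esub>" using homA group_hom.hom_one by metis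
lemma oneB: "\<one>\<^bsub>B\<^esub> = e \<one>\<^bsub>C\<^esub>" using homB group_hom.hom_one by metis
lemma oneAB: "\<one>\<^bsub>B\<^esub> = \<one>\<^bsub>A\<^esub>" using oneA oneB by simp
lemma oneH: "\<one>\<^bsub>A\<^esub> \<in> H" using oneA grpC group.is_monoid monoid.one_closed by blast

lemma multH: "x \<in> H \<Longrightarrow> y \<in> H \<Longrightarrow> x \<otimes>\<^bsub>A\<^esub> y = x \<otimes>\<^bsub>B\<^esub> y"
proof -
  assume "x \<in> H" "y \<in> H"
  then obtain a b where "a \<in> carrier C" "b \<in> carrier C" "x = e a" "y = e b" by blast
  then show ?thesis using homA homB group_hom.hom_mult by metis
qed

lemma invH: "x \<in> H \<Longrightarrow> inv\<^bsub>A\<^esub> x = inv\<^bsub>B\<^esub> x"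
proof -
  assume "x \<in> H"
  then obtain a where "a \<in> carrier C" "x = e a" by blast
  then show ?thesis using homA homB group_hom.hom_inv by metis
qed

lemma multH_closed: "x \<in> H \<Longrightarrow> y \<in> H \<Longrightarrow> x \<otimes>\<^bsub>A\<^esub> y \<in> H"
  using subgroup.m_closed[OF subA] by blast

lemma rel_lists: "rel u v \<Longrightarrow> u \<in> L \<and> v \<in> L"
proof (induction rule: amal_rel.induct)
  case (amal_multA a b) then show ?case using grpA group.is_monoid monoid.m_closed by fastforce
next
  case (amal_multB a b) then show ?case using grpB group.is_monoid monoid.m_closed by fastforce
next
  case amal_oneA then show ?case using grpA group.is_monoid monoid.one_closed by fastforce
next
  case amal_oneB then show ?case using grpB group.is_monoid monoid.one_closed by fastforce
qed auto

lemma rel_refl: "w \<in> L \<Longrightarrow> rel w w" by (rule amal_refl)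

lemma rel_app: "rel u u' \<Longrightarrow> rel v v' \<Longrightarrow> rel (u @ v) (u' @ v')"
proof -
  assume 1: "rel u u'" and 2: "rel v v'"
  have "rel ([] @ u @ v) ([] @ u' @ v)" using amal_ctx[OF 1, of "[]" v] rel_lists[OF 2] by auto
  moreover have "rel (u' @ v @ []) (u' @ v' @ [])" using amal_ctx[OF 2, of u' "[]"] rel_lists[OF 1] by auto
  ultimately show ?thesis using amal_trans by fastforce
qed

lemma rel_cons: "rel u u' \<Longrightarrow> x \<in> carrier A \<union> carrier B \<Longrightarrow> rel (x # u) (x # u')"
  using rel_app[of "[x]" "[x]" u u'] rel_refl[of "[x]"] by auto

lemma cls_eq: "u \<in> L \<Longrightarrow> (cls A B u = cls A B v) = rel u v"
proof
  assume u: "u \<in> L" and eq: "cls A B u = cls A B v"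
  have "u \<in> cls A B u" using u rel_refl by (simp add: cls_def)
  then have "u \<in> cls A B v" using eq by simp
  then have "rel v u" by (simp add: cls_def)
  then show "rel u v" by (rule amal_sym)
next
  assume "rel u v"
  then show "cls A B u = cls A B v" unfolding cls_def
    by (auto intro: amal_trans amal_sym)
qed

definition P where "P = amal_prod A B"
definition emb where "emb = amal_emb A B e"

lemma carrierP: "carrier P = cls A B ` L"
  unfolding P_def amal_prod_def quotient_def cls_def by auto

lemma multP: "u \<in> L \<Longrightarrow> v \<in> L \<Longrightarrow> cls A B u \<otimes>\<^bsub>P\<^esub> cls A B v = cls A B (u @ v)"
  unfolding P_def amal_prod_def cls_def
  apply (auto intro: amal_trans rel_app)
  using rel_refl by blast+

lemma oneP: "\<one>\<^bsub>P\<^esub> = cls A B []"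
  unfolding P_def amal_prod_def cls_def by simp

lemma embP: "emb c = cls A B [e c]"
  unfolding emb_def amal_emb_def cls_def by simp

lemma linv_closed: "x \<in> carrier A \<union> carrier B \<Longrightarrow> linv A B x \<in> carrier A \<union> carrier B"
  unfolding linv_def using grpA grpB group.inv_closed by fastforce

lemma rel_linv: "x \<in> carrier A \<union> carrier B \<Longrightarrow> rel [x, linv A B x] [] \<and> rel [linv A B x, x] []"
proof (cases "x \<in> carrier A")
  case True
  then have "rel [x, linv A B x] [x \<otimes>\<^bsub>A\<^esub> inv\<^bsub>A\<^esub> x]" "rel [linv A B x, x] [inv\<^bsub>A\<^esub> x \<otimes>\<^bsub>A\<^esub> x]"
    using amal_multA grpA group.inv_closed unfolding linv_def by fastforce+
  then show ?thesis using True grpA group.r_inv group.l_inv amal_oneA amal_trans by metis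
next
  case False
  assume x: "x \<in> carrier A \<union> carrier B"
  then have xB: "x \<in> carrier B" using False by blast
  then have "rel [x, linv A B x] [x \<otimes>\<^bsub>B\<^esub> inv\<^bsub>B\<^esub> x]" "rel [linv A B x, x] [inv\<^bsub>B\<^esub> x \<otimes>\<^bsub>B\<^esub> x]"
    using amal_multB grpB group.inv_closed False unfolding linv_def by fastforce+
  then show ?thesis using xB grpB group.r_inv group.l_inv amal_oneB amal_trans by metis
qed

lemma winv_L: "w \<in> L \<Longrightarrow> winv A B w \<in> L"
proof -
  assume w: "w \<in> L"
  have "\<forall>x\<in>set w. linv A B x \<in> carrier A \<union> carrier B"
    using w linv_closed by (simp add: in_lists_conv_set)
  then show ?thesis by (simp add: winv_def in_lists_conv_set)
qed

lemma rel_winv: "w \<in> L \<Longrightarrow> rel (w @ winv A B w) [] \<and> rel (winv A B w @ w) []"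
proof (induction w)
  case Nil then show ?case using rel_refl by (simp add: winv_def)
next
  case (Cons x w)
  have x: "x \<in> carrier A \<union> carrier B" and w: "w \<in> L" using Cons.prems by auto
  have wi: "winv A B (x # w) = winv A B w @ [linv A B x]" by (simp add: winv_def)
  have lx: "[linv A B x] \<in> L" using linv_closed x by simp
  have 1: "rel ((x # w) @ winv A B (x # w)) ([x] @ [] @ [linv A B x])"
    using wi rel_app[OF rel_app[OF rel_refl[of "[x]"] conjunct1[OF Cons.IH[OF w]]] rel_refl[OF lx]] x by simp
  have 2: "rel (winv A B (x # w) @ x # w) (winv A B w @ [] @ w)"
    using wi amal_ctx[OF conjunct2[OF rel_linv[OF x]], of "winv A B w" w] winv_L[OF w] w by simp
  show ?case using 1 2 rel_linv[OF x] conjunct2[OF Cons.IH[OF w]] amal_trans by fastforce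
qed

lemma invP: "w \<in> L \<Longrightarrow> inv\<^bsub>P\<^esub> (cls A B w) = cls A B (winv A B w)"
proof -
  assume w: "w \<in> L"
  have wi: "winv A B w \<in> L" using winv_L w .
  show ?thesis unfolding m_inv_def
  proof (rule the_equality)
    show "cls A B (winv A B w) \<in> carrier P \<and> cls A B w \<otimes>\<^bsub>P\<^esub> cls A B (winv A B w) = \<one>\<^bsub>P\<^esub>
        \<and> cls A B (winv A B w) \<otimes>\<^bsub>P\<^esub> cls A B w = \<one>\<^bsub>P\<^esub>"
      using carrierP multP oneP wi w rel_winv cls_eq by (metis image_eqI rel_lists)
  next
    fix y assume y: "y \<in> carrier P \<and> cls A B w \<otimes>\<^bsub>P\<^esub> y = \<one>\<^bsub>P\<^esub> \<and> y \<otimes>\<^bsub>P\<^esub> cls A B w = \<one>\<^bsub>P\<^esub>"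
    then obtain v where v: "v \<in> L" "y = cls A B v" using carrierP by auto
    have r1: "rel (w @ v) []" using y v w multP oneP cls_eq by (metis append_in_lists_conv)
    have "rel (winv A B w @ (w @ v)) (winv A B w @ [])" using rel_app[OF rel_refl[OF wi] r1] .
    moreover have "rel ((winv A B w @ w) @ v) ([] @ v)" using rel_app[OF conjunct2[OF rel_winv[OF w]] rel_refl[OF v(1)]] .
    ultimately have "rel v (winv A B w)" using amal_trans amal_sym by fastforce
    then show "y = cls A B (winv A B w)" using v cls_eq by metis
  qed
qed

end


context amal
begin

lemma Xfacts:
  assumes "X = A \<or> X = B"
  shows "group X" "subgroup H X" "H \<subseteq> carrier X" "\<one>\<^bsub>X\<^esub> = \<one>\<^bsub>A\<^esub>"
  using assms grpA grpB subA subB HA HB oneAB by auto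

definition rep :: "'a monoid \<Rightarrow> 'a \<Rightarrow> 'a" where
  "rep X x = (SOME y. \<exists>h\<in>H. y = h \<otimes>\<^bsub>X\<^esub> x)"

lemma rep_ex:
  assumes X: "X = A \<or> X = B" and x: "x \<in> carrier X"
  shows "\<exists>h\<in>H. rep X x = h \<otimes>\<^bsub>X\<^esub> x"
proof -
  interpret G: group X using Xfacts[OF X] by simp
  have "\<one>\<^bsub>X\<^esub> \<in> H" using Xfacts(4)[OF X] oneH by simp
  moreover have "x = \<one>\<^bsub>X\<^esub> \<otimes>\<^bsub>X\<^esub> x" using x by simp
  ultimately have "\<exists>y. \<exists>h\<in>H. y = h \<otimes>\<^bsub>X\<^esub> x" by blast
  then show ?thesis unfolding rep_def by (rule someI_ex)
qed

lemma rep_closed: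
  assumes X: "X = A \<or> X = B" and x: "x \<in> carrier X"
  shows "rep X x \<in> carrier X"
proof -
  interpret G: group X using Xfacts[OF X] by simp
  obtain h where "h \<in> H" "rep X x = h \<otimes>\<^bsub>X\<^esub> x" using rep_ex[OF X x] by blast
  then show ?thesis using x Xfacts(3)[OF X] by auto
qed

lemma rep_H:
  assumes X: "X = A \<or> X = B" and x: "x \<in> carrier X" and h: "h \<in> H"
  shows "rep X (h \<otimes>\<^bsub>X\<^esub> x) = rep X x"
proof -
  interpret G: group X using Xfacts[OF X] by simp
  interpret S: subgroup H X using Xfacts[OF X] by simp
  have hX: "h \<in> carrier X" using h by auto
  have "(\<lambda>y. \<exists>h'\<in>H. y = h' \<otimes>\<^bsub>X\<^esub> (h \<otimes>\<^bsub>X\<^esub> x)) = (\<lambda>y. \<exists>h'\<in>H. y = h' \<otimes>\<^bsub>X\<^esub> x)"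
  proof (rule ext, rule iffI)
    fix y assume "\<exists>h'\<in>H. y = h' \<otimes>\<^bsub>X\<^esub> (h \<otimes>\<^bsub>X\<^esub> x)"
    then obtain h' where h': "h' \<in> H" "y = h' \<otimes>\<^bsub>X\<^esub> (h \<otimes>\<^bsub>X\<^esub> x)" by blast
    then have "y = (h' \<otimes>\<^bsub>X\<^esub> h) \<otimes>\<^bsub>X\<^esub> x" using hX x by (simp add: G.m_assoc)
    moreover have "h' \<otimes>\<^bsub>X\<^esub> h \<in> H" using h h' by simp
    ultimately show "\<exists>h'\<in>H. y = h' \<otimes>\<^bsub>X\<^esub> x" by blast
  next
    fix y assume "\<exists>h'\<in>H. y = h' \<otimes>\<^bsub>X\<^esub> x"
    then obtain h' where h': "h' \<in> H" "y = h' \<otimes>\<^bsub>X\<^esub> x" by blast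
    have h'X: "h' \<in> carrier X" using h' by auto
    have ix: "inv\<^bsub>X\<^esub> h \<otimes>\<^bsub>X\<^esub> (h \<otimes>\<^bsub>X\<^esub> x) = x" using hX x by (simp add: G.m_assoc[symmetric])
    have "y = (h' \<otimes>\<^bsub>X\<^esub> inv\<^bsub>X\<^esub> h) \<otimes>\<^bsub>X\<^esub> (h \<otimes>\<^bsub>X\<^esub> x)"
      using hX h'X x h' ix by (simp add: G.m_assoc)
    moreover have "h' \<otimes>\<^bsub>X\<^esub> inv\<^bsub>X\<^esub> h \<in> H" using h h' by simp
    ultimately show "\<exists>h'\<in>H. y = h' \<otimes>\<^bsub>X\<^esub> (h \<otimes>\<^bsub>X\<^esub> x)" by blast
  qed
  then show ?thesis unfolding rep_def by simp
qed

lemma rep_rep: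
  assumes X: "X = A \<or> X = B" and x: "x \<in> carrier X"
  shows "rep X (rep X x) = rep X x"
  using rep_ex[OF X x] rep_H[OF X x] by metis

lemma rep_notH:
  assumes X: "X = A \<or> X = B" and x: "x \<in> carrier X" and nx: "x \<notin> H"
  shows "rep X x \<notin> H"
proof
  interpret G: group X using Xfacts[OF X] by simp
  interpret S: subgroup H X using Xfacts[OF X] by simp
  assume r: "rep X x \<in> H"
  obtain h where h: "h \<in> H" "rep X x = h \<otimes>\<^bsub>X\<^esub> x" using rep_ex[OF X x] by blast
  have hX: "h \<in> carrier X" using h by auto
  have "x = inv\<^bsub>X\<^esub> h \<otimes>\<^bsub>X\<^esub> rep X x" using h hX x by (simp add: G.m_assoc[symmetric])
  then have "x \<in> H" using h r by (metis S.m_closed S.m_inv_closed)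
  then show False using nx by simp
qed

lemma rep_quot:
  assumes X: "X = A \<or> X = B" and x: "x \<in> carrier X"
  shows "x \<otimes>\<^bsub>X\<^esub> inv\<^bsub>X\<^esub> (rep X x) \<in> H"
proof -
  interpret G: group X using Xfacts[OF X] by simp
  interpret S: subgroup H X using Xfacts[OF X] by simp
  obtain h where h: "h \<in> H" "rep X x = h \<otimes>\<^bsub>X\<^esub> x" using rep_ex[OF X x] by blast
  have hX: "h \<in> carrier X" using h by auto
  have "x \<otimes>\<^bsub>X\<^esub> inv\<^bsub>X\<^esub> (rep X x) = inv\<^bsub>X\<^esub> h"
    using h hX x by (simp add: G.inv_mult_group G.m_assoc[symmetric])
  then show ?thesis using h by simp
qed

definition validts :: "'a list \<Rightarrow> bool" where
  "validts ts \<longleftrightarrow> set ts \<subseteq> (carrier A \<union> carrier B) - H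
     \<and> (\<forall>t\<in>set ts. t \<in> carrier A \<longrightarrow> rep A t = t)
     \<and> (\<forall>t\<in>set ts. t \<in> carrier B \<longrightarrow> rep B t = t) \<and> altw A ts"

definition valid :: "'a \<times> 'a list \<Rightarrow> bool" where
  "valid \<omega> \<longleftrightarrow> fst \<omega> \<in> H \<and> validts (snd \<omega>)"

lemma altw_tl: assumes "altw X ts" shows "altw X (tl ts)"
proof (cases ts)
  case (Cons x r) then show ?thesis using assms by (cases r) auto
qed simp

lemma validts_tl: "validts ts \<Longrightarrow> validts (tl ts)"
  unfolding validts_def using altw_tl[of A ts] by (cases ts) auto

lemma validts_cons: "validts (t # ts) \<Longrightarrow> validts ts"
  using validts_tl[of "t # ts"] by simp

lemma hd_tl_not:
  assumes X: "X = A \<or> X = B" and v: "validts ts" and ne: "ts \<noteq> []" and hX: "hd ts \<in> carrier X"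
  shows "tl ts = [] \<or> hd (tl ts) \<notin> carrier X"
proof -
  obtain x r where ts: "ts = x # r" using ne by (cases ts) auto
  show ?thesis
  proof (cases r)
    case Nil then show ?thesis using ts by simp
  next
    case (Cons y r')
    then have alt: "(x \<in> carrier A) \<noteq> (y \<in> carrier A)" and xs: "x \<in> carrier A \<union> carrier B" "x \<notin> H"
       and ys: "y \<in> carrier A \<union> carrier B" "y \<notin> H"
      using v ts unfolding validts_def by auto
    have "y \<notin> carrier X"
      using X hX ts alt xs ys inter by auto
    then show ?thesis using ts Cons by simp
  qed
qed

definition norm :: "'a monoid \<Rightarrow> 'a \<Rightarrow> 'a list \<Rightarrow> 'a \<times> 'a list" where
  "norm X g ts = (if g \<in> H then (g, ts) else (g \<otimes>\<^bsub>X\<^esub> inv\<^bsub>X\<^esub> (rep X g), rep X g # ts))"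

definition splt :: "'a monoid \<Rightarrow> 'a \<times> 'a list \<Rightarrow> 'a \<times> 'a list" where
  "splt X \<omega> = (if snd \<omega> \<noteq> [] \<and> hd (snd \<omega>) \<in> carrier X
      then (fst \<omega> \<otimes>\<^bsub>X\<^esub> hd (snd \<omega>), tl (snd \<omega>)) else \<omega>)"

definition act :: "'a monoid \<Rightarrow> 'a \<Rightarrow> 'a \<times> 'a list \<Rightarrow> 'a \<times> 'a list" where
  "act X a \<omega> = norm X (a \<otimes>\<^bsub>X\<^esub> fst (splt X \<omega>)) (snd (splt X \<omega>))"

lemma splt_props:
  assumes X: "X = A \<or> X = B" and v: "valid \<omega>"
  shows "fst (splt X \<omega>) \<in> carrier X \<and> validts (snd (splt X \<omega>))
     \<and> (snd (splt X \<omega>) = [] \<or> hd (snd (splt X \<omega>)) \<notin> carrier X)"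
proof -
  interpret G: group X using Xfacts[OF X] by simp
  have c: "fst \<omega> \<in> carrier X" using v Xfacts(3)[OF X] unfolding valid_def by auto
  have vt: "validts (snd \<omega>)" using v unfolding valid_def by simp
  show ?thesis
  proof (cases "snd \<omega> \<noteq> [] \<and> hd (snd \<omega>) \<in> carrier X")
    case True
    then show ?thesis using c vt validts_tl hd_tl_not[OF X vt] unfolding splt_def by auto
  next
    case False
    then show ?thesis using c vt unfolding splt_def by auto
  qed
qed

lemma norm_valid:
  assumes X: "X = A \<or> X = B" and g: "g \<in> carrier X" and vr: "validts rest"
    and hr: "rest = [] \<or> hd rest \<notin> carrier X"
  shows "valid (norm X g rest)"
proof (cases "g \<in> H")
  case True
  then show ?thesis using vr unfolding norm_def valid_def by simp
next
  case False
  let ?r = "rep X g"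
  have rX: "?r \<in> carrier X" using rep_closed[OF X g] .
  have rH: "?r \<notin> H" using rep_notH[OF X g False] .
  have rr: "rep X ?r = ?r" using rep_rep[OF X g] .
  have q: "g \<otimes>\<^bsub>X\<^esub> inv\<^bsub>X\<^esub> ?r \<in> H" using rep_quot[OF X g] .
  have r1: "?r \<in> (carrier A \<union> carrier B) - H" using X rX rH by auto
  have r2: "?r \<in> carrier A \<longrightarrow> rep A ?r = ?r" using X rX rH rr inter by auto
  have r3: "?r \<in> carrier B \<longrightarrow> rep B ?r = ?r" using X rX rH rr inter by auto
  have alt: "altw A (?r # rest)"
  proof (cases rest)
    case Nil then show ?thesis by simp
  next
    case (Cons y r)
    have ys: "y \<in> carrier A \<union> carrier B" "y \<notin> carrier X" "altw A (y # r)"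
      using vr hr Cons unfolding validts_def by auto
    have "(?r \<in> carrier A) \<noteq> (y \<in> carrier A)" using X ys rX rH inter by auto
    then show ?thesis using Cons ys by simp
  qed
  show ?thesis using False q r1 r2 r3 alt vr unfolding norm_def valid_def validts_def by auto
qed

lemma splt_norm:
  assumes X: "X = A \<or> X = B" and g: "g \<in> carrier X" and hr: "rest = [] \<or> hd rest \<notin> carrier X"
  shows "splt X (norm X g rest) = (g, rest)"
proof (cases "g \<in> H")
  case True
  then show ?thesis using hr unfolding norm_def splt_def by auto
next
  case False
  interpret G: group X using Xfacts[OF X] by simp
  have rX: "rep X g \<in> carrier X" using rep_closed[OF X g] .
  have "g \<otimes>\<^bsub>X\<^esub> inv\<^bsub>X\<^esub> rep X g \<otimes>\<^bsub>X\<^esub> rep X g = g" using rX g by (simp add: G.m_assoc)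
  then show ?thesis using False rX unfolding norm_def splt_def by simp
qed

lemma act_valid:
  assumes X: "X = A \<or> X = B" and a: "a \<in> carrier X" and v: "valid \<omega>"
  shows "valid (act X a \<omega>)"
proof -
  interpret G: group X using Xfacts[OF X] by simp
  show ?thesis unfolding act_def using splt_props[OF X v] a
    by (intro norm_valid[OF X]) auto
qed

lemma act_comp:
  assumes X: "X = A \<or> X = B" and a: "a \<in> carrier X" and b: "b \<in> carrier X" and v: "valid \<omega>"
  shows "act X a (act X b \<omega>) = act X (a \<otimes>\<^bsub>X\<^esub> b) \<omega>"
proof -
  interpret G: group X using Xfacts[OF X] by simp
  have s: "fst (splt X \<omega>) \<in> carrier X" "snd (splt X \<omega>) = [] \<or> hd (snd (splt X \<omega>)) \<notin> carrier X"
    using splt_props[OF X v] by auto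
  have "splt X (act X b \<omega>) = (b \<otimes>\<^bsub>X\<^esub> fst (splt X \<omega>), snd (splt X \<omega>))"
    unfolding act_def using s b by (intro splt_norm[OF X]) auto
  then show ?thesis using s a b unfolding act_def by (simp add: G.m_assoc)
qed

lemma act_one:
  assumes X: "X = A \<or> X = B" and v: "valid \<omega>"
  shows "act X \<one>\<^bsub>X\<^esub> \<omega> = \<omega>"
proof -
  interpret G: group X using Xfacts[OF X] by simp
  interpret S: subgroup H X using Xfacts[OF X] by simp
  obtain c ts where w: "\<omega> = (c, ts)" by fastforce
  have c: "c \<in> H" and vt: "validts ts" using v w unfolding valid_def by auto
  have cX: "c \<in> carrier X" using c by auto
  show ?thesis
  proof (cases "ts \<noteq> [] \<and> hd ts \<in> carrier X")
    case True
    then obtain t r where ts: "ts = t # r" and tX: "t \<in> carrier X" by (cases ts) auto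
    have tH: "t \<notin> H" and tr: "rep X t = t" using vt ts X tX unfolding validts_def by auto
    have ctH: "c \<otimes>\<^bsub>X\<^esub> t \<notin> H"
    proof
      assume "c \<otimes>\<^bsub>X\<^esub> t \<in> H"
      moreover have "t = inv\<^bsub>X\<^esub> c \<otimes>\<^bsub>X\<^esub> (c \<otimes>\<^bsub>X\<^esub> t)" using cX tX by (simp add: G.m_assoc[symmetric])
      ultimately have "t \<in> H" using c by (metis S.m_closed S.m_inv_closed)
      then show False using tH by simp
    qed
    have rp: "rep X (c \<otimes>\<^bsub>X\<^esub> t) = t" using rep_H[OF X tX c] tr by simp
    have "c \<otimes>\<^bsub>X\<^esub> t \<otimes>\<^bsub>X\<^esub> inv\<^bsub>X\<^esub> t = c" using cX tX by (simp add: G.m_assoc)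
    then show ?thesis using w ts tX cX ctH rp unfolding act_def splt_def norm_def by simp
  next
    case False
    then show ?thesis using w cX c unfolding act_def splt_def norm_def by auto
  qed
qed

lemma act_H:
  assumes X: "X = A \<or> X = B" and h: "h \<in> H" and v: "valid (c, ts)"
  shows "act X h (c, ts) = (h \<otimes>\<^bsub>X\<^esub> c, ts)"
proof -
  interpret G: group X using Xfacts[OF X] by simp
  interpret S: subgroup H X using Xfacts[OF X] by simp
  have c: "c \<in> H" and vt: "validts ts" using v unfolding valid_def by auto
  have cX: "c \<in> carrier X" and hX: "h \<in> carrier X" using c h by auto
  have hc: "h \<otimes>\<^bsub>X\<^esub> c \<in> H" using h c by simp
  show ?thesis
  proof (cases "ts \<noteq> [] \<and> hd ts \<in> carrier X")
    case True
    then obtain t r where ts: "ts = t # r" and tX: "t \<in> carrier X" by (cases ts) auto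
    have tH: "t \<notin> H" and tr: "rep X t = t" using vt ts X tX unfolding validts_def by auto
    have hcX: "h \<otimes>\<^bsub>X\<^esub> c \<in> carrier X" using hc by auto
    have ctH: "(h \<otimes>\<^bsub>X\<^esub> c) \<otimes>\<^bsub>X\<^esub> t \<notin> H"
    proof
      assume "(h \<otimes>\<^bsub>X\<^esub> c) \<otimes>\<^bsub>X\<^esub> t \<in> H"
      moreover have "t = inv\<^bsub>X\<^esub> (h \<otimes>\<^bsub>X\<^esub> c) \<otimes>\<^bsub>X\<^esub> ((h \<otimes>\<^bsub>X\<^esub> c) \<otimes>\<^bsub>X\<^esub> t)"
        using hcX tX by (simp add: G.m_assoc[symmetric])
      ultimately have "t \<in> H" using hc by (metis S.m_closed S.m_inv_closed)
      then show False using tH by simp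
    qed
    have rp: "rep X ((h \<otimes>\<^bsub>X\<^esub> c) \<otimes>\<^bsub>X\<^esub> t) = t" using rep_H[OF X tX hc] tr by simp
    have e1: "h \<otimes>\<^bsub>X\<^esub> (c \<otimes>\<^bsub>X\<^esub> t) = (h \<otimes>\<^bsub>X\<^esub> c) \<otimes>\<^bsub>X\<^esub> t" using hX cX tX by (simp add: G.m_assoc)
    have e2: "(h \<otimes>\<^bsub>X\<^esub> c) \<otimes>\<^bsub>X\<^esub> t \<otimes>\<^bsub>X\<^esub> inv\<^bsub>X\<^esub> t = h \<otimes>\<^bsub>X\<^esub> c" using hcX tX by (simp add: G.m_assoc)
    show ?thesis using ts tX ctH rp e1 e2 unfolding act_def splt_def norm_def by simp
  next
    case False
    then show ?thesis using hc unfolding act_def splt_def norm_def by auto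
  qed
qed

lemma act_grow:
  assumes X: "X = A \<or> X = B" and x: "x \<in> carrier X" "x \<notin> H" and v: "valid (c, ts)"
    and hts: "ts = [] \<or> hd ts \<notin> carrier X"
  shows "snd (act X x (c, ts)) = rep X (x \<otimes>\<^bsub>X\<^esub> c) # ts \<and> rep X (x \<otimes>\<^bsub>X\<^esub> c) \<in> carrier X
     \<and> rep X (x \<otimes>\<^bsub>X\<^esub> c) \<notin> H"
proof -
  interpret G: group X using Xfacts[OF X] by simp
  interpret S: subgroup H X using Xfacts[OF X] by simp
  have c: "c \<in> H" using v unfolding valid_def by auto
  have cX: "c \<in> carrier X" using c by auto
  have xc: "x \<otimes>\<^bsub>X\<^esub> c \<in> carrier X" using x cX by simp
  have nH: "x \<otimes>\<^bsub>X\<^esub> c \<notin> H"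
  proof
    assume "x \<otimes>\<^bsub>X\<^esub> c \<in> H"
    moreover have "x = (x \<otimes>\<^bsub>X\<^esub> c) \<otimes>\<^bsub>X\<^esub> inv\<^bsub>X\<^esub> c" using x cX by (simp add: G.m_assoc)
    ultimately have "x \<in> H" using c by (metis S.m_closed S.m_inv_closed)
    then show False using x by simp
  qed
  have "splt X (c, ts) = (c, ts)" using hts unfolding splt_def by auto
  then show ?thesis using nH rep_closed[OF X xc] rep_notH[OF X xc nH] unfolding act_def norm_def by simp
qed

end


context amal
begin

definition actl :: "'a \<Rightarrow> 'a \<times> 'a list \<Rightarrow> 'a \<times> 'a list" where
  "actl x = (if x \<in> carrier A then act A x else act B x)"

definition actw :: "'a list \<Rightarrow> 'a \<times> 'a list \<Rightarrow> 'a \<times> 'a list" where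
  "actw w \<omega> = foldr actl w \<omega>"

lemma actw_Nil[simp]: "actw [] \<omega> = \<omega>" by (simp add: actw_def)
lemma actw_Cons[simp]: "actw (x # w) \<omega> = actl x (actw w \<omega>)" by (simp add: actw_def)
lemma actw_append: "actw (u @ v) \<omega> = actw u (actw v \<omega>)" by (simp add: actw_def)

lemma actl_valid: "x \<in> carrier A \<union> carrier B \<Longrightarrow> valid \<omega> \<Longrightarrow> valid (actl x \<omega>)"
  unfolding actl_def using act_valid[of A x \<omega>] act_valid[of B x \<omega>] by auto

lemma actw_valid: "w \<in> L \<Longrightarrow> valid \<omega> \<Longrightarrow> valid (actw w \<omega>)"
  by (induction w) (auto intro: actl_valid)

lemma actl_B:
  assumes x: "x \<in> carrier B" and v: "valid \<omega>"
  shows "actl x \<omega> = act B x \<omega>"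
proof (cases "x \<in> carrier A")
  case True
  then have xH: "x \<in> H" using x inter by blast
  obtain c ts where w: "\<omega> = (c, ts)" by fastforce
  have c: "c \<in> H" using v w unfolding valid_def by simp
  show ?thesis using act_H[of A x c ts] act_H[of B x c ts] xH v w c multH True
    unfolding actl_def by simp
next
  case False
  then show ?thesis unfolding actl_def by simp
qed

lemma rel_act: "rel u v \<Longrightarrow> \<forall>\<omega>. valid \<omega> \<longrightarrow> actw u \<omega> = actw v \<omega>"
proof (induction rule: amal_rel.induct)
  case (amal_ctx u v xs ys)
  show ?case
  proof (intro allI impI)
    fix \<omega> assume v: "valid \<omega>"
    have "valid (actw ys \<omega>)" using actw_valid amal_ctx v by blast
    then have "actw u (actw ys \<omega>) = actw v (actw ys \<omega>)" using amal_ctx.IH by blast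
    then show "actw (xs @ u @ ys) \<omega> = actw (xs @ v @ ys) \<omega>"
      by (simp add: actw_append)
  qed
next
  case (amal_multA a b)
  have "act A a (act A b \<omega>) = act A (a \<otimes>\<^bsub>A\<^esub> b) \<omega>" if "valid \<omega>" for \<omega>
    using act_comp[of A a b \<omega>] amal_multA that by simp
  moreover have "a \<otimes>\<^bsub>A\<^esub> b \<in> carrier A" using amal_multA grpA group.is_monoid monoid.m_closed by fastforce
  ultimately show ?case using amal_multA by (simp add: actl_def)
next
  case (amal_multB a b)
  have ab: "a \<otimes>\<^bsub>B\<^esub> b \<in> carrier B" using amal_multB grpB group.is_monoid monoid.m_closed by fastforce
  show ?case
  proof (intro allI impI)
    fix \<omega> assume v: "valid \<omega>"
    have vb: "valid (act B b \<omega>)" using act_valid[of B b \<omega>] amal_multB v by simp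
    have "actw [a, b] \<omega> = act B a (act B b \<omega>)"
      using actl_B[OF amal_multB(2) v] actl_B[OF amal_multB(1) vb] by simp
    also have "\<dots> = act B (a \<otimes>\<^bsub>B\<^esub> b) \<omega>" using act_comp[of B a b \<omega>] amal_multB v by simp
    also have "\<dots> = actw [a \<otimes>\<^bsub>B\<^esub> b] \<omega>" using actl_B[OF ab v] by simp
    finally show "actw [a, b] \<omega> = actw [a \<otimes>\<^bsub>B\<^esub> b] \<omega>" .
  qed
next
  case amal_oneA
  have "\<one>\<^bsub>A\<^esub> \<in> carrier A" using grpA group.is_monoid monoid.one_closed by blast
  then show ?case using act_one[of A] by (simp add: actl_def)
next
  case amal_oneB
  have o: "\<one>\<^bsub>B\<^esub> \<in> carrier B" using grpB group.is_monoid monoid.one_closed by blast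
  show ?case using act_one[of B] actl_B[OF o] by simp
qed auto

definition "\<omega>0 = (\<one>\<^bsub>A\<^esub>, ([] :: 'a list))"

lemma valid0: "valid \<omega>0"
  unfolding \<omega>0_def valid_def validts_def using oneH by simp

lemma actw_single_H: "h \<in> H \<Longrightarrow> actw [h] \<omega>0 = (h, [])"
proof -
  assume h: "h \<in> H"
  have hA: "h \<in> carrier A" using h HA by blast
  have "act A h \<omega>0 = (h \<otimes>\<^bsub>A\<^esub> \<one>\<^bsub>A\<^esub>, [])" using act_H[of A h "\<one>\<^bsub>A\<^esub>" "[]"] h valid0
    unfolding \<omega>0_def by simp
  moreover have "h \<otimes>\<^bsub>A\<^esub> \<one>\<^bsub>A\<^esub> = h" using monoid.r_one[OF group.is_monoid[OF grpA] hA] .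
  ultimately show ?thesis using hA by (simp add: actl_def)
qed

lemma nf_one: "h \<in> H \<Longrightarrow> rel [h] [] \<Longrightarrow> h = \<one>\<^bsub>A\<^esub>"
proof -
  assume h: "h \<in> H" and r: "rel [h] []"
  have "actw [h] \<omega>0 = actw [] \<omega>0" using rel_act[OF r] valid0 by blast
  then show ?thesis using actw_single_H[OF h] unfolding \<omega>0_def by simp
qed

lemma mult_H_iff:
  assumes X: "X = A \<or> X = B" and h: "h \<in> H" and y: "y \<in> carrier X"
  shows "(h \<otimes>\<^bsub>X\<^esub> y \<in> H) = (y \<in> H)" "(y \<otimes>\<^bsub>X\<^esub> h \<in> H) = (y \<in> H)"
proof -
  interpret G: group X using Xfacts[OF X] by simp
  interpret S: subgroup H X using Xfacts[OF X] by simp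
  have hX: "h \<in> carrier X" using h by auto
  have e1: "y = inv\<^bsub>X\<^esub> h \<otimes>\<^bsub>X\<^esub> (h \<otimes>\<^bsub>X\<^esub> y)" using hX y by (simp add: G.m_assoc[symmetric])
  have e2: "y = (y \<otimes>\<^bsub>X\<^esub> h) \<otimes>\<^bsub>X\<^esub> inv\<^bsub>X\<^esub> h" using hX y by (simp add: G.m_assoc)
  show "(h \<otimes>\<^bsub>X\<^esub> y \<in> H) = (y \<in> H)" using e1 h by (metis S.m_closed S.m_inv_closed)
  show "(y \<otimes>\<^bsub>X\<^esub> h \<in> H) = (y \<in> H)" using e2 h by (metis S.m_closed S.m_inv_closed)
qed

lemma step_grow:
  assumes x: "x \<in> (carrier A \<union> carrier B) - H" and v: "valid (c, ts)"
    and hts: "ts = [] \<or> (hd ts \<in> carrier A) \<noteq> (x \<in> carrier A)"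
  shows "\<exists>c' t. actl x (c, ts) = (c', t # ts) \<and> valid (c', t # ts) \<and> ((t \<in> carrier A) = (x \<in> carrier A))"
proof -
  define X where "X = (if x \<in> carrier A then A else B)"
  have X: "X = A \<or> X = B" unfolding X_def by simp
  have xX: "x \<in> carrier X" "x \<notin> H" using x unfolding X_def by auto
  have vt: "validts ts" using v unfolding valid_def by simp
  have hX: "ts = [] \<or> hd ts \<notin> carrier X"
  proof (cases ts)
    case (Cons y r)
    have "y \<in> (carrier A \<union> carrier B) - H" using vt Cons unfolding validts_def by auto
    then show ?thesis using hts Cons inter unfolding X_def by auto
  qed simp
  have g: "snd (act X x (c, ts)) = rep X (x \<otimes>\<^bsub>X\<^esub> c) # ts \<and> rep X (x \<otimes>\<^bsub>X\<^esub> c) \<in> carrier X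
     \<and> rep X (x \<otimes>\<^bsub>X\<^esub> c) \<notin> H" using act_grow[OF X xX v hX] .
  have ax: "actl x (c, ts) = act X x (c, ts)" unfolding actl_def X_def by simp
  have va: "valid (act X x (c, ts))" using act_valid[OF X xX(1) v] .
  have "(rep X (x \<otimes>\<^bsub>X\<^esub> c) \<in> carrier A) = (x \<in> carrier A)"
    using g inter unfolding X_def by auto
  then show ?thesis using g ax va by (metis prod.collapse)
qed

lemma nfalt_tl: "nfalt A B H (x # r) \<Longrightarrow> r \<noteq> [] \<Longrightarrow> nfalt A B H r"
  unfolding nfalt_def using altw_tl[of A "x # r"] by auto

lemma nfalt_act:
  "nfalt A B H r \<Longrightarrow> \<exists>c ts. actw r \<omega>0 = (c, ts) \<and> valid (c, ts) \<and> length ts = length r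
     \<and> ts \<noteq> [] \<and> ((hd ts \<in> carrier A) = (hd r \<in> carrier A))"
proof (induction r)
  case Nil then show ?case by (simp add: nfalt_def)
next
  case (Cons x r)
  have x: "x \<in> (carrier A \<union> carrier B) - H" using Cons.prems unfolding nfalt_def by auto
  show ?case
  proof (cases "r = []")
    case True
    have "valid (\<one>\<^bsub>A\<^esub>, [])" using valid0 unfolding \<omega>0_def .
    then obtain c' t where "actl x (\<one>\<^bsub>A\<^esub>, []) = (c', [t]) \<and> valid (c', [t]) \<and> ((t \<in> carrier A) = (x \<in> carrier A))"
      using step_grow[OF x, of "\<one>\<^bsub>A\<^esub>" "[]"] by auto
    then show ?thesis using True unfolding \<omega>0_def by auto
  next
    case False
    then obtain c ts where IH: "actw r \<omega>0 = (c, ts)" "valid (c, ts)" "length ts = length r" "ts \<noteq> []"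
      "(hd ts \<in> carrier A) = (hd r \<in> carrier A)" using Cons.IH nfalt_tl[OF Cons.prems] by blast
    obtain y r' where r: "r = y # r'" using False by (cases r) auto
    have "(x \<in> carrier A) \<noteq> (y \<in> carrier A)" using Cons.prems r unfolding nfalt_def by simp
    then have "(hd ts \<in> carrier A) \<noteq> (x \<in> carrier A)" using IH(5) r by simp
    then obtain c' t where "actl x (c, ts) = (c', t # ts) \<and> valid (c', t # ts) \<and> ((t \<in> carrier A) = (x \<in> carrier A))"
      using step_grow[OF x IH(2)] by blast
    then show ?thesis using IH by auto
  qed
qed

lemma nfalt_not_H: "nfalt A B H r \<Longrightarrow> h \<in> H \<Longrightarrow> \<not> rel r [h]"
proof
  assume n: "nfalt A B H r" and h: "h \<in> H" and r: "rel r [h]"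
  obtain c ts where "actw r \<omega>0 = (c, ts)" "ts \<noteq> []" using nfalt_act[OF n] by blast
  moreover have "actw r \<omega>0 = actw [h] \<omega>0" using rel_act[OF r] valid0 by blast
  ultimately show False using actw_single_H[OF h] by simp
qed

lemma nfalt_not_one: "nfalt A B H r \<Longrightarrow> \<not> rel r []"
proof
  assume n: "nfalt A B H r" and r: "rel r []"
  obtain c ts where "actw r \<omega>0 = (c, ts)" "ts \<noteq> []" using nfalt_act[OF n] by blast
  moreover have "actw r \<omega>0 = actw [] \<omega>0" using rel_act[OF r] valid0 by blast
  ultimately show False unfolding \<omega>0_def by simp
qed

lemma altw_replace: "(z \<in> carrier A) = (y \<in> carrier A) \<Longrightarrow> altw A (y # r) \<Longrightarrow> altw A (z # r)"
  by (cases r) auto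

lemma merge:
  assumes x: "x \<in> carrier A \<union> carrier B" and y: "y \<in> carrier A \<union> carrier B"
    and same: "(x \<in> H) \<or> (x \<in> carrier A) = (y \<in> carrier A)" and yH: "y \<notin> H"
  shows "\<exists>z. z \<in> carrier A \<union> carrier B \<and> rel [x, y] [z] \<and> (z \<notin> H \<longrightarrow> (z \<in> carrier A) = (y \<in> carrier A))
     \<and> (x \<in> H \<longrightarrow> z \<notin> H)"
proof -
  define X where "X = (if y \<in> carrier A then A else B)"
  have X: "X = A \<or> X = B" unfolding X_def by simp
  have yX: "y \<in> carrier X" using y unfolding X_def by auto
  have xX: "x \<in> carrier X" using x same yH HA HB inter unfolding X_def by auto
  interpret G: group X using Xfacts[OF X] by simp
  let ?z = "x \<otimes>\<^bsub>X\<^esub> y"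
  have zX: "?z \<in> carrier X" using xX yX by simp
  have r: "rel [x, y] [?z]" using xX yX X_def amal_multA amal_multB by (cases "y \<in> carrier A") auto
  have zA: "?z \<notin> H \<longrightarrow> (?z \<in> carrier A) = (y \<in> carrier A)" using zX inter unfolding X_def by auto
  have "x \<in> H \<longrightarrow> ?z \<notin> H" using mult_H_iff(1)[OF X _ yX] yH by blast
  then show ?thesis using zX X r zA by blast
qed

lemma absorb:
  assumes h: "h \<in> H" and n: "nfalt A B H r"
  shows "\<exists>r'. nfalt A B H r' \<and> rel (h # r) r'"
proof -
  obtain y r' where r: "r = y # r'" using n unfolding nfalt_def by (cases r) auto
  have y: "y \<in> carrier A \<union> carrier B" "y \<notin> H" and r'L: "r' \<in> L" using n r unfolding nfalt_def by auto
  have hAB: "h \<in> carrier A \<union> carrier B" using h HA by blast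
  obtain z where z: "z \<in> carrier A \<union> carrier B" "rel [h, y] [z]" "z \<notin> H \<longrightarrow> (z \<in> carrier A) = (y \<in> carrier A)"
    "z \<notin> H" using merge[OF hAB y(1) _ y(2)] h by blast
  have "rel ([] @ [h, y] @ r') ([] @ [z] @ r')" using amal_ctx[OF z(2), of "[]" r'] r'L by simp
  moreover have "nfalt A B H (z # r')" using n r z altw_replace[of z y r'] unfolding nfalt_def by auto
  ultimately show ?thesis using r by auto
qed

lemma nf_exists: "w \<in> L \<Longrightarrow> (\<exists>h\<in>H. rel w [h]) \<or> (\<exists>r. nfalt A B H r \<and> rel w r)"
proof (induction w)
  case Nil
  have "rel [] [\<one>\<^bsub>A\<^esub>]" using amal_oneA amal_sym by blast
  then show ?case using oneH by blast
next
  case (Cons x w)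
  have x: "x \<in> carrier A \<union> carrier B" and w: "w \<in> L" using Cons.prems by auto
  from Cons.IH[OF w] show ?case
  proof
    assume "\<exists>h\<in>H. rel w [h]"
    then obtain h where h: "h \<in> H" "rel w [h]" by blast
    have hAB: "h \<in> carrier A \<union> carrier B" using h HA by blast
    define X where "X = (if x \<in> carrier A then A else B)"
    have X: "X = A \<or> X = B" unfolding X_def by simp
    have xX: "x \<in> carrier X" using x unfolding X_def by auto
    have hX: "h \<in> carrier X" using h Xfacts(3)[OF X] by blast
    interpret G: group X using Xfacts[OF X] by simp
    let ?z = "x \<otimes>\<^bsub>X\<^esub> h"
    have zX: "?z \<in> carrier X" using xX hX by simp
    have r1: "rel [x, h] [?z]" using xX hX X_def amal_multA amal_multB by (cases "x \<in> carrier A") auto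
    have r0: "rel (x # w) [x, h]" using rel_cons[OF h(2) x] .
    have r: "rel (x # w) [?z]" using amal_trans[OF r0 r1] .
    show ?thesis
    proof (cases "?z \<in> H")
      case True then show ?thesis using r by blast
    next
      case False
      have "nfalt A B H [?z]" using False zX X unfolding nfalt_def by auto
      then show ?thesis using r by blast
    qed
  next
    assume "\<exists>r. nfalt A B H r \<and> rel w r"
    then obtain r where n: "nfalt A B H r" and rw: "rel w r" by blast
    obtain y r' where r: "r = y # r'" using n unfolding nfalt_def by (cases r) auto
    have y: "y \<in> carrier A \<union> carrier B" "y \<notin> H" and r'L: "r' \<in> L" using n r unfolding nfalt_def by auto
    have r0: "rel (x # w) (x # r)" using rel_cons[OF rw x] .
    show ?thesis
    proof (cases "x \<in> H")
      case True
      obtain r2 where "nfalt A B H r2" "rel (x # r) r2" using absorb[OF True n] by blast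
      then show ?thesis using amal_trans[OF r0] by blast
    next
      case xH: False
      show ?thesis
      proof (cases "(x \<in> carrier A) = (y \<in> carrier A)")
        case False
        have "nfalt A B H (x # r)" using n r x xH False unfolding nfalt_def by auto
        then show ?thesis using r0 by blast
      next
        case True
        obtain z where z: "z \<in> carrier A \<union> carrier B" "rel [x, y] [z]"
          "z \<notin> H \<longrightarrow> (z \<in> carrier A) = (y \<in> carrier A)"
          using merge[OF x y(1) disjI2[OF True] y(2)] by blast
        have "rel ([] @ [x, y] @ r') ([] @ [z] @ r')" using amal_ctx[OF z(2), of "[]" r'] r'L by simp
        then have "rel (x # r) (z # r')" using r by simp
        then have r1: "rel (x # w) (z # r')" using amal_trans[OF r0] by blast
        show ?thesis
        proof (cases "z \<in> H")
          case False
          have "nfalt A B H (z # r')" using n r z False altw_replace[of z y r'] unfolding nfalt_def by auto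
          then show ?thesis using r1 by blast
        next
          case zH: True
          show ?thesis
          proof (cases "r' = []")
            case True then show ?thesis using r1 zH by blast
          next
            case False
            have "nfalt A B H r'" using nfalt_tl[of y r'] n r False by simp
            then obtain r2 where "nfalt A B H r2" "rel (z # r') r2" using absorb[OF zH] by blast
            then show ?thesis using amal_trans[OF r1] by blast
          qed
        qed
      qed
    qed
  qed
qed

end


definition good :: "'a monoid \<Rightarrow> 'a monoid \<Rightarrow> 'b monoid \<Rightarrow> 'b monoid \<Rightarrow> 'a set \<Rightarrow> ('a \<Rightarrow> 'b) \<Rightarrow> bool" where
  "good A1 B1 A2 B2 F f \<longleftrightarrow>
    (\<forall>x\<in>F. (x \<in> carrier A1 \<longrightarrow> f x \<in> carrier A2) \<and> (x \<in> carrier B1 \<longrightarrow> f x \<in> carrier B2))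
  \<and> (\<forall>x\<in>F. \<forall>y\<in>F. x \<in> carrier A1 \<longrightarrow> y \<in> carrier A1 \<longrightarrow> x \<otimes>\<^bsub>A1\<^esub> y \<in> F \<longrightarrow>
        f (x \<otimes>\<^bsub>A1\<^esub> y) = f x \<otimes>\<^bsub>A2\<^esub> f y)
  \<and> (\<forall>x\<in>F. \<forall>y\<in>F. x \<in> carrier B1 \<longrightarrow> y \<in> carrier B1 \<longrightarrow> x \<otimes>\<^bsub>B1\<^esub> y \<in> F \<longrightarrow>
        f (x \<otimes>\<^bsub>B1\<^esub> y) = f x \<otimes>\<^bsub>B2\<^esub> f y)
  \<and> (\<one>\<^bsub>A1\<^esub> \<in> F \<longrightarrow> f \<one>\<^bsub>A1\<^esub> = \<one>\<^bsub>A2\<^esub>) \<and> (\<one>\<^bsub>B1\<^esub> \<in> F \<longrightarrow> f \<one>\<^bsub>B1\<^esub> = \<one>\<^bsub>B2\<^esub>)"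

lemma good_mono: "good A1 B1 A2 B2 F' f \<Longrightarrow> F \<subseteq> F' \<Longrightarrow> good A1 B1 A2 B2 F f"
  unfolding good_def by (meson subsetD)

lemma good_lists:
  assumes g: "good A1 B1 A2 B2 F f" and w: "set w \<subseteq> F" and F: "F \<subseteq> carrier A1 \<union> carrier B1"
  shows "map f w \<in> lists (carrier A2 \<union> carrier B2)"
proof -
  have "\<forall>x\<in>set w. f x \<in> carrier A2 \<union> carrier B2"
  proof
    fix x assume x: "x \<in> set w"
    then have "x \<in> F" using w by blast
    then show "f x \<in> carrier A2 \<union> carrier B2" using g F unfolding good_def by blast
  qed
  then show ?thesis by (simp add: in_lists_conv_set)
qed

lemma rel_transfer:
  assumes gA: "group A1" and gB: "group B1"
  shows "amal_rel A1 B1 u v \<Longrightarrow> \<exists>F. finite F \<and> F \<subseteq> carrier A1 \<union> carrier B1 \<and> set u \<union> set v \<subseteq> F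
     \<and> (\<forall>f. good A1 B1 A2 B2 F f \<longrightarrow> amal_rel A2 B2 (map f u) (map f v))"
proof (induction rule: amal_rel.induct)
  case (amal_refl w)
  have "set w \<subseteq> carrier A1 \<union> carrier B1" using amal_refl by (simp add: in_lists_conv_set subset_iff)
  moreover have "\<forall>f. good A1 B1 A2 B2 (set w) f \<longrightarrow> amal_rel A2 B2 (map f w) (map f w)"
  proof (intro allI impI)
    fix f assume "good A1 B1 A2 B2 (set w) f"
    then have "map f w \<in> lists (carrier A2 \<union> carrier B2)" using good_lists calculation by blast
    then show "amal_rel A2 B2 (map f w) (map f w)" by (rule amal_rel.amal_refl)
  qed
  ultimately show ?case by (intro exI[of _ "set w"]) auto
next
  case (amal_sym u v)
  then obtain F where F: "finite F" "F \<subseteq> carrier A1 \<union> carrier B1" "set u \<union> set v \<subseteq> F"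
     "\<forall>f. good A1 B1 A2 B2 F f \<longrightarrow> amal_rel A2 B2 (map f u) (map f v)" by blast
  have "\<forall>f. good A1 B1 A2 B2 F f \<longrightarrow> amal_rel A2 B2 (map f v) (map f u)"
    using F(4) amal_rel.amal_sym by blast
  then show ?case using F(1-3) by (intro exI[of _ F]) auto
next
  case (amal_trans u v w)
  obtain F1 where F1: "finite F1" "F1 \<subseteq> carrier A1 \<union> carrier B1" "set u \<union> set v \<subseteq> F1"
     "\<forall>f. good A1 B1 A2 B2 F1 f \<longrightarrow> amal_rel A2 B2 (map f u) (map f v)" using amal_trans.IH(1) by blast
  obtain F2 where F2: "finite F2" "F2 \<subseteq> carrier A1 \<union> carrier B1" "set v \<union> set w \<subseteq> F2"
     "\<forall>f. good A1 B1 A2 B2 F2 f \<longrightarrow> amal_rel A2 B2 (map f v) (map f w)" using amal_trans.IH(2) by blast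
  have "\<forall>f. good A1 B1 A2 B2 (F1 \<union> F2) f \<longrightarrow> amal_rel A2 B2 (map f u) (map f w)"
  proof (intro allI impI)
    fix f assume g: "good A1 B1 A2 B2 (F1 \<union> F2) f"
    have "good A1 B1 A2 B2 F1 f" "good A1 B1 A2 B2 F2 f" using good_mono[OF g] by auto
    then have "amal_rel A2 B2 (map f u) (map f v)" "amal_rel A2 B2 (map f v) (map f w)"
      using F1(4) F2(4) by blast+
    then show "amal_rel A2 B2 (map f u) (map f w)" by (rule amal_rel.amal_trans)
  qed
  moreover have "finite (F1 \<union> F2)" "F1 \<union> F2 \<subseteq> carrier A1 \<union> carrier B1" "set u \<union> set w \<subseteq> F1 \<union> F2"
    using F1 F2 by auto
  ultimately show ?case by (intro exI[of _ "F1 \<union> F2"]) auto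
next
  case (amal_ctx u v xs ys)
  obtain F where F: "finite F" "F \<subseteq> carrier A1 \<union> carrier B1" "set u \<union> set v \<subseteq> F"
     "\<forall>f. good A1 B1 A2 B2 F f \<longrightarrow> amal_rel A2 B2 (map f u) (map f v)" using amal_ctx.IH by blast
  let ?F = "F \<union> set xs \<union> set ys"
  have sub: "set xs \<union> set ys \<subseteq> carrier A1 \<union> carrier B1" using amal_ctx.hyps by (auto simp: in_lists_conv_set)
  have "\<forall>f. good A1 B1 A2 B2 ?F f \<longrightarrow> amal_rel A2 B2 (map f (xs @ u @ ys)) (map f (xs @ v @ ys))"
  proof (intro allI impI)
    fix f assume g: "good A1 B1 A2 B2 ?F f"
    have r: "amal_rel A2 B2 (map f u) (map f v)" using F(4) good_mono[OF g] by blast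
    have "map f xs \<in> lists (carrier A2 \<union> carrier B2)" "map f ys \<in> lists (carrier A2 \<union> carrier B2)"
      using good_lists[OF g] F(2) sub by auto
    then show "amal_rel A2 B2 (map f (xs @ u @ ys)) (map f (xs @ v @ ys))"
      using amal_rel.amal_ctx[OF r] by simp
  qed
  moreover have "finite ?F" "?F \<subseteq> carrier A1 \<union> carrier B1" "set (xs @ u @ ys) \<union> set (xs @ v @ ys) \<subseteq> ?F"
    using F sub by auto
  ultimately show ?case by (intro exI[of _ ?F]) auto
next
  case (amal_multA a b)
  have ab: "a \<otimes>\<^bsub>A1\<^esub> b \<in> carrier A1" using monoid.m_closed[OF group.is_monoid[OF gA] amal_multA] .
  let ?F = "{a, b, a \<otimes>\<^bsub>A1\<^esub> b}"
  have "\<forall>f. good A1 B1 A2 B2 ?F f \<longrightarrow> amal_rel A2 B2 (map f [a, b]) (map f [a \<otimes>\<^bsub>A1\<^esub> b])"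
  proof (intro allI impI)
    fix f assume g: "good A1 B1 A2 B2 ?F f"
    have "f a \<in> carrier A2" "f b \<in> carrier A2" "f (a \<otimes>\<^bsub>A1\<^esub> b) = f a \<otimes>\<^bsub>A2\<^esub> f b"
      using g amal_multA unfolding good_def by auto
    then show "amal_rel A2 B2 (map f [a, b]) (map f [a \<otimes>\<^bsub>A1\<^esub> b])" using amal_rel.amal_multA by simp
  qed
  then show ?case using ab amal_multA by (intro exI[of _ ?F]) auto
next
  case (amal_multB a b)
  have ab: "a \<otimes>\<^bsub>B1\<^esub> b \<in> carrier B1" using monoid.m_closed[OF group.is_monoid[OF gB] amal_multB] .
  let ?F = "{a, b, a \<otimes>\<^bsub>B1\<^esub> b}"
  have "\<forall>f. good A1 B1 A2 B2 ?F f \<longrightarrow> amal_rel A2 B2 (map f [a, b]) (map f [a \<otimes>\<^bsub>B1\<^esub> b])"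
  proof (intro allI impI)
    fix f assume g: "good A1 B1 A2 B2 ?F f"
    have "f a \<in> carrier B2" "f b \<in> carrier B2" "f (a \<otimes>\<^bsub>B1\<^esub> b) = f a \<otimes>\<^bsub>B2\<^esub> f b"
      using g amal_multB unfolding good_def by auto
    then show "amal_rel A2 B2 (map f [a, b]) (map f [a \<otimes>\<^bsub>B1\<^esub> b])" using amal_rel.amal_multB by simp
  qed
  then show ?case using ab amal_multB by (intro exI[of _ ?F]) auto
next
  case amal_oneA
  have o: "\<one>\<^bsub>A1\<^esub> \<in> carrier A1" using monoid.one_closed[OF group.is_monoid[OF gA]] .
  have "\<forall>f. good A1 B1 A2 B2 {\<one>\<^bsub>A1\<^esub>} f \<longrightarrow> amal_rel A2 B2 (map f [\<one>\<^bsub>A1\<^esub>]) (map f [])"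
    unfolding good_def using amal_rel.amal_oneA by auto
  then show ?case using o by (intro exI[of _ "{\<one>\<^bsub>A1\<^esub>}"]) auto
next
  case amal_oneB
  have o: "\<one>\<^bsub>B1\<^esub> \<in> carrier B1" using monoid.one_closed[OF group.is_monoid[OF gB]] .
  have "\<forall>f. good A1 B1 A2 B2 {\<one>\<^bsub>B1\<^esub>} f \<longrightarrow> amal_rel A2 B2 (map f [\<one>\<^bsub>B1\<^esub>]) (map f [])"
    unfolding good_def using amal_rel.amal_oneB by auto
  then show ?case using o by (intro exI[of _ "{\<one>\<^bsub>B1\<^esub>}"]) auto
qed

lemma winv_map:
  "(\<forall>x\<in>set v. f (linv A1 B1 x) = linv A2 B2 (f x)) \<Longrightarrow> map f (winv A1 B1 v) = winv A2 B2 (map f v)"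
  unfolding winv_def by (induction v) auto

fun tsubs :: "'c lterm \<Rightarrow> 'c lterm list" where
  "tsubs (LVar i) = [LVar i]"
| "tsubs (LConst c) = [LConst c]"
| "tsubs (LMul s t) = LMul s t # tsubs s @ tsubs t"
| "tsubs (LInv t) = LInv t # tsubs t"

fun ftms :: "'c lform \<Rightarrow> 'c lterm list" where
  "ftms (LEq s t) = tsubs s @ tsubs t"
| "ftms (LDelta t) = tsubs t"
| "ftms (LNot f) = ftms f"
| "ftms (LAnd f g) = ftms f @ ftms g"
| "ftms (LOr f g) = ftms f @ ftms g"

lemma tsubs_self: "t \<in> set (tsubs t)" by (cases t) auto

lemma tsubs_trans: "u \<in> set (tsubs t) \<Longrightarrow> set (tsubs u) \<subseteq> set (tsubs t)"
  by (induction t) auto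

lemma tsubs_consts: "u \<in> set (tsubs t) \<Longrightarrow> lterm_consts u \<subseteq> lterm_consts t"
  by (induction t) auto

lemma ftms_closed: "u \<in> set (ftms \<phi>) \<Longrightarrow> set (tsubs u) \<subseteq> set (ftms \<phi>)"
proof (induction \<phi>)
  case (LEq s t) then show ?case using tsubs_trans[of u s] tsubs_trans[of u t] by auto
next
  case (LDelta t) then show ?case using tsubs_trans[of u t] by auto
qed auto

lemma ftms_consts: "u \<in> set (ftms \<phi>) \<Longrightarrow> lterm_consts u \<subseteq> lform_consts \<phi>"
proof (induction \<phi>)
  case (LEq s t) then show ?case using tsubs_consts[of u s] tsubs_consts[of u t] by auto
next
  case (LDelta t) then show ?case using tsubs_consts[of u t] by auto
qed auto

context amal
begin

lemma teval_wd:
  assumes ws: "\<forall>i. ws i \<in> L"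
  shows "lterm_consts t \<subseteq> carrier C \<Longrightarrow>
    teval P emb (\<lambda>i. cls A B (ws i)) t = cls A B (wd A B e ws t) \<and> wd A B e ws t \<in> L"
proof (induction t)
  case (LVar i) then show ?case using ws by simp
next
  case (LConst c)
  have "e c \<in> carrier A" using LConst group_hom.hom_closed[OF homA] by simp
  then show ?case using embP by simp
next
  case (LMul s t) then show ?case using multP by simp
next
  case (LInv t) then show ?case using invP winv_L by simp
qed

lemma fsat_wsat:
  assumes ws: "\<forall>i. ws i \<in> L"
  shows "lform_consts \<phi> \<subseteq> carrier C \<Longrightarrow>
    fsat P emb (emb ` carrier C) (\<lambda>i. cls A B (ws i)) \<phi> = wsat C A B e ws \<phi>"
proof (induction \<phi>)
  case (LEq s t)
  then show ?case using teval_wd[OF ws, of s] teval_wd[OF ws, of t] cls_eq by simp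
next
  case (LDelta t)
  have tw: "teval P emb (\<lambda>i. cls A B (ws i)) t = cls A B (wd A B e ws t)" "wd A B e ws t \<in> L"
    using teval_wd[OF ws, of t] LDelta by auto
  have "(cls A B (wd A B e ws t) \<in> emb ` carrier C) = (\<exists>c\<in>carrier C. rel (wd A B e ws t) [e c])"
    using embP cls_eq[OF tw(2)] by auto
  then show ?case using tw by simp
qed auto

lemma ex_holds_iff:
  assumes "lform_consts \<phi> \<subseteq> carrier C"
  shows "ex_holds C (amal_prod A B) (amal_emb A B e) \<phi> = (\<exists>ws. (\<forall>i. ws i \<in> L) \<and> wsat C A B e ws \<phi>)"
proof
  assume "ex_holds C (amal_prod A B) (amal_emb A B e) \<phi>"
  then obtain \<sigma> where s: "\<forall>i. \<sigma> i \<in> carrier P" "fsat P emb (emb ` carrier C) \<sigma> \<phi>"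
    unfolding ex_holds_def P_def emb_def by blast
  define ws where "ws i = (SOME w. w \<in> L \<and> \<sigma> i = cls A B w)" for i
  have wsi: "\<forall>i. ws i \<in> L \<and> \<sigma> i = cls A B (ws i)"
  proof
    fix i
    have "\<sigma> i \<in> cls A B ` L" using s(1) carrierP by simp
    then have "\<exists>w. w \<in> L \<and> \<sigma> i = cls A B w" by blast
    then show "ws i \<in> L \<and> \<sigma> i = cls A B (ws i)" unfolding ws_def by (rule someI_ex)
  qed
  then have sig: "\<sigma> = (\<lambda>i. cls A B (ws i))" by auto
  have wsL: "\<forall>i. ws i \<in> L" using wsi by blast
  have "wsat C A B e ws \<phi>" using s(2) fsat_wsat[OF wsL assms] sig by simp
  then show "\<exists>ws. (\<forall>i. ws i \<in> L) \<and> wsat C A B e ws \<phi>" using wsL by blast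
next
  assume "\<exists>ws. (\<forall>i. ws i \<in> L) \<and> wsat C A B e ws \<phi>"
  then obtain ws where ws: "\<forall>i. ws i \<in> L" "wsat C A B e ws \<phi>" by blast
  have "\<forall>i. cls A B (ws i) \<in> carrier P" using ws carrierP by auto
  moreover have "fsat P emb (emb ` carrier C) (\<lambda>i. cls A B (ws i)) \<phi>" using fsat_wsat[OF ws(1) assms] ws(2) by simp
  ultimately show "ex_holds C (amal_prod A B) (amal_emb A B e) \<phi>"
    unfolding ex_holds_def P_def emb_def by (intro exI[of _ "\<lambda>i. cls A B (ws i)"]) simp
qed

lemma K3: "u \<in> L \<Longrightarrow> v \<in> L \<Longrightarrow> rel u v = rel (u @ winv A B v) []"
proof
  assume u: "u \<in> L" and v: "v \<in> L" and r: "rel u v"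
  have "rel (u @ winv A B v) (v @ winv A B v)" using rel_app[OF r rel_refl[OF winv_L[OF v]]] .
  then show "rel (u @ winv A B v) []" using rel_winv[OF v] amal_trans by blast
next
  assume u: "u \<in> L" and v: "v \<in> L" and r: "rel (u @ winv A B v) []"
  have "rel (u @ []) (u @ (winv A B v @ v))"
    using rel_app[OF rel_refl[OF u] amal_sym[OF conjunct2[OF rel_winv[OF v]]]] .
  moreover have "rel ((u @ winv A B v) @ v) ([] @ v)" using rel_app[OF r rel_refl[OF v]] .
  ultimately show "rel u v" using amal_trans by fastforce
qed

lemma char_H:
  assumes h: "h \<in> H" and r: "rel w [h]"
  shows "(rel w [] = (h = \<one>\<^bsub>A\<^esub>)) \<and> (\<exists>c\<in>carrier C. rel w [e c])"
proof -
  have "rel w [] \<Longrightarrow> h = \<one>\<^bsub>A\<^esub>"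
  proof -
    assume "rel w []"
    then have "rel [h] []" using amal_trans[OF amal_sym[OF r]] by blast
    then show ?thesis using nf_one h by blast
  qed
  moreover have "h = \<one>\<^bsub>A\<^esub> \<Longrightarrow> rel w []" using r amal_oneA amal_trans by metis
  moreover have "\<exists>c\<in>carrier C. rel w [e c]" using h r by blast
  ultimately show ?thesis by blast
qed

lemma char_alt:
  assumes n: "nfalt A B H n" and r: "rel w n"
  shows "\<not> rel w [] \<and> \<not> (\<exists>c\<in>carrier C. rel w [e c])"
proof -
  have "\<not> rel w []"
  proof
    assume "rel w []"
    then have "rel n []" using amal_trans[OF amal_sym[OF r]] by blast
    then show False using nfalt_not_one[OF n] by blast
  qed
  moreover have "\<not> (\<exists>c\<in>carrier C. rel w [e c])"
  proof
    assume "\<exists>c\<in>carrier C. rel w [e c]"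
    then obtain c where c: "c \<in> carrier C" "rel w [e c]" by blast
    then have "rel n [e c]" using amal_trans[OF amal_sym[OF r]] by blast
    then show False using nfalt_not_H[OF n] c(1) by blast
  qed
  ultimately show ?thesis by blast
qed

end


lemma altw_map:
  "altw A1 n \<Longrightarrow> (\<forall>x\<in>set n. (f x \<in> carrier A2) = (x \<in> carrier A1)) \<Longrightarrow> altw A2 (map f n)"
  by (induction A1 n rule: altw.induct) auto

lemma build_f:
  assumes s1: "amal C A1 B1 e1" and s2: "amal C A2 B2 e2"
    and F: "F \<subseteq> carrier A1 \<union> carrier B1"
    and iA: "lc_iso C A1 e1 A2 e2 (F \<inter> carrier A1) TA fa" and TA: "TA \<subseteq> carrier A2"
    and iB: "lc_iso C B1 e1 B2 e2 (F \<inter> carrier B1) TB fb" and TB: "TB \<subseteq> carrier B2"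
    and fdef: "f = (\<lambda>x. if x \<in> carrier A1 then fa x else fb x)"
  shows "good A1 B1 A2 B2 F f"
   and "\<forall>c\<in>carrier C. e1 c \<in> F \<longrightarrow> f (e1 c) = e2 c"
   and "\<forall>x\<in>F. linv A1 B1 x \<in> F \<longrightarrow> f (linv A1 B1 x) = linv A2 B2 (f x)"
   and "\<forall>x\<in>F. (x \<in> e1 ` carrier C) = (f x \<in> e2 ` carrier C)"
   and "\<forall>x\<in>F. x \<notin> e1 ` carrier C \<longrightarrow> (x \<in> carrier A1) = (f x \<in> carrier A2)"
proof -
  interpret s1: amal C A1 B1 e1 by (rule s1)
  interpret s2: amal C A2 B2 e2 by (rule s2)
  interpret GA1: group A1 by (rule s1.grpA)
  interpret GB1: group B1 by (rule s1.grpB)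
  interpret GA2: group A2 by (rule s2.grpA)
  interpret GB2: group B2 by (rule s2.grpB)
  let ?SA = "F \<inter> carrier A1" and ?SB = "F \<inter> carrier B1"
  have bA: "bij_betw fa ?SA TA" and pA: "lc_pres C A1 e1 A2 e2 ?SA fa"
    and qA: "lc_pres C A2 e2 A1 e1 TA (inv_into ?SA fa)" using iA unfolding lc_iso_def by auto
  have bB: "bij_betw fb ?SB TB" and pB: "lc_pres C B1 e1 B2 e2 ?SB fb"
    and qB: "lc_pres C B2 e2 B1 e1 TB (inv_into ?SB fb)" using iB unfolding lc_iso_def by auto
  have fA: "x \<in> carrier A1 \<Longrightarrow> f x = fa x" for x using fdef by simp
  have cA: "c \<in> carrier C \<Longrightarrow> e1 c \<in> F \<Longrightarrow> fa (e1 c) = e2 c" for c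
    using pA s1.HA unfolding lc_pres_def by blast
  have cB: "c \<in> carrier C \<Longrightarrow> e1 c \<in> F \<Longrightarrow> fb (e1 c) = e2 c" for c
    using pB s1.HB unfolding lc_pres_def by blast
  have fB: "x \<in> F \<Longrightarrow> x \<in> carrier B1 \<Longrightarrow> f x = fb x" for x
  proof (cases "x \<in> carrier A1")
    case True
    assume x: "x \<in> F" "x \<in> carrier B1"
    then obtain c where c: "c \<in> carrier C" "x = e1 c" using True s1.inter by blast
    then show ?thesis using cA cB x fdef by simp
  qed (simp add: fdef)
  have qA2: "\<forall>s\<in>TA. s \<in> e2 ` carrier C \<longrightarrow> inv_into ?SA fa s \<in> e1 ` carrier C"
    using qA unfolding lc_pres_def by (elim conjE) assumption
  have qB2: "\<forall>s\<in>TB. s \<in> e2 ` carrier C \<longrightarrow> inv_into ?SB fb s \<in> e1 ` carrier C"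
    using qB unfolding lc_pres_def by (elim conjE) assumption
  have e1A: "c \<in> carrier C \<Longrightarrow> e1 c \<in> carrier A1" for c using subsetD[OF s1.HA imageI] by blast
  have fconst: "\<forall>c\<in>carrier C. e1 c \<in> F \<longrightarrow> f (e1 c) = e2 c"
  proof (intro ballI impI)
    fix c assume c: "c \<in> carrier C" and cF: "e1 c \<in> F"
    show "f (e1 c) = e2 c" using fA[OF e1A[OF c]] cA[OF c cF] by simp
  qed
  then show "\<forall>c\<in>carrier C. e1 c \<in> F \<longrightarrow> f (e1 c) = e2 c" .
  have carA: "x \<in> F \<Longrightarrow> x \<in> carrier A1 \<Longrightarrow> f x \<in> carrier A2" for x
  proof -
    assume "x \<in> F" "x \<in> carrier A1"
    then have "x \<in> ?SA" by (rule IntI)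
    then have "fa x \<in> TA" by (rule bij_betw_apply[OF bA])
    then show "f x \<in> carrier A2" using fA[OF \<open>x \<in> carrier A1\<close>] TA by auto
  qed
  have carB: "x \<in> F \<Longrightarrow> x \<in> carrier B1 \<Longrightarrow> f x \<in> carrier B2" for x
  proof -
    assume x: "x \<in> F" "x \<in> carrier B1"
    then have "x \<in> ?SB" by (rule IntI)
    then have "fb x \<in> TB" by (rule bij_betw_apply[OF bB])
    then show "f x \<in> carrier B2" using fB[OF x] TB by auto
  qed
  have Hfw: "x \<in> F \<Longrightarrow> x \<in> e1 ` carrier C \<Longrightarrow> f x \<in> e2 ` carrier C" for x
  proof -
    assume x: "x \<in> F" "x \<in> e1 ` carrier C"
    from x(2) obtain c where c: "c \<in> carrier C" "x = e1 c" by (rule imageE) simp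
    then have "f x = e2 c" using fconst x by simp
    then show ?thesis using c by simp
  qed
  have Hbw: "x \<in> F \<Longrightarrow> f x \<in> e2 ` carrier C \<Longrightarrow> x \<in> e1 ` carrier C" for x
  proof (cases "x \<in> carrier A1")
    case True
    assume x: "x \<in> F" "f x \<in> e2 ` carrier C"
    have xS: "x \<in> ?SA" using x(1) True by (rule IntI)
    have "fa x \<in> TA" using bij_betw_apply[OF bA xS] .
    moreover have "fa x \<in> e2 ` carrier C" using x fA[OF True] by simp
    ultimately have "inv_into ?SA fa (fa x) \<in> e1 ` carrier C" using qA2 by simp
    moreover have "inv_into ?SA fa (fa x) = x" using bij_betw_inv_into_left[OF bA xS] .
    ultimately show ?thesis by simp
  next
    case False
    assume x: "x \<in> F" "f x \<in> e2 ` carrier C"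
    have xB: "x \<in> carrier B1" using False subsetD[OF F x(1)] by simp
    have xS: "x \<in> ?SB" using x(1) xB by (rule IntI)
    have "fb x \<in> TB" using bij_betw_apply[OF bB xS] .
    moreover have "fb x \<in> e2 ` carrier C" using x fB[OF x(1) xB] by simp
    ultimately have "inv_into ?SB fb (fb x) \<in> e1 ` carrier C" using qB2 by simp
    moreover have "inv_into ?SB fb (fb x) = x" using bij_betw_inv_into_left[OF bB xS] .
    ultimately show ?thesis by simp
  qed
  show Hiff: "\<forall>x\<in>F. (x \<in> e1 ` carrier C) = (f x \<in> e2 ` carrier C)" using Hfw Hbw by blast
  have fac: "x \<in> F \<Longrightarrow> x \<notin> e1 ` carrier C \<Longrightarrow> (x \<in> carrier A1) = (f x \<in> carrier A2)" for x
  proof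
    assume "x \<in> F" "x \<in> carrier A1" then show "f x \<in> carrier A2" using carA by blast
  next
    assume x: "x \<in> F" "x \<notin> e1 ` carrier C" and fx: "f x \<in> carrier A2"
    show "x \<in> carrier A1"
    proof (rule ccontr)
      assume nA: "x \<notin> carrier A1"
      then have "x \<in> carrier B1" using x F by blast
      then have "f x \<in> carrier B2" using carB x by blast
      then have "f x \<in> e2 ` carrier C" using fx s2.inter by blast
      then show False using Hbw x by blast
    qed
  qed
  then show "\<forall>x\<in>F. x \<notin> e1 ` carrier C \<longrightarrow> (x \<in> carrier A1) = (f x \<in> carrier A2)" by blast
  show "\<forall>x\<in>F. linv A1 B1 x \<in> F \<longrightarrow> f (linv A1 B1 x) = linv A2 B2 (f x)"
  proof (intro ballI impI)
    fix x assume x: "x \<in> F" and lx: "linv A1 B1 x \<in> F"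
    show "f (linv A1 B1 x) = linv A2 B2 (f x)"
    proof (cases "x \<in> carrier A1")
      case True
      have li: "linv A1 B1 x = inv\<^bsub>A1\<^esub> x" using True by (simp add: linv_def)
      have iA1: "inv\<^bsub>A1\<^esub> x \<in> carrier A1" using True by simp
      have "fa (inv\<^bsub>A1\<^esub> x) = inv\<^bsub>A2\<^esub> (fa x)"
        using pA x True lx li iA1 unfolding lc_pres_def by auto
      moreover have "f x \<in> carrier A2" using carA x True by blast
      ultimately show ?thesis using li fA True iA1 by (simp add: linv_def)
    next
      case False
      have xB: "x \<in> carrier B1" using False x F by blast
      have li: "linv A1 B1 x = inv\<^bsub>B1\<^esub> x" using False by (simp add: linv_def)
      have iB1: "inv\<^bsub>B1\<^esub> x \<in> carrier B1" using xB by simp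
      have niA: "inv\<^bsub>B1\<^esub> x \<notin> carrier A1"
      proof
        assume "inv\<^bsub>B1\<^esub> x \<in> carrier A1"
        then have "inv\<^bsub>B1\<^esub> x \<in> e1 ` carrier C" using iB1 s1.inter by blast
        then have "inv\<^bsub>B1\<^esub> (inv\<^bsub>B1\<^esub> x) \<in> e1 ` carrier C" using subgroup.m_inv_closed[OF s1.subB] by blast
        then have "x \<in> e1 ` carrier C" using xB by simp
        then show False using False s1.HA by blast
      qed
      have xH: "x \<notin> e1 ` carrier C" using False s1.HA by blast
      have fxA: "f x \<notin> carrier A2" using fac[OF x xH] False by simp
      have "fb (inv\<^bsub>B1\<^esub> x) = inv\<^bsub>B2\<^esub> (fb x)"
        using pB x xB lx li iB1 unfolding lc_pres_def by auto
      then show ?thesis using li fB[OF x xB] fB lx iB1 niA fxA by (simp add: linv_def)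
    qed
  qed
  show "good A1 B1 A2 B2 F f"
    unfolding good_def
  proof (intro conjI)
    show "\<forall>x\<in>F. (x \<in> carrier A1 \<longrightarrow> f x \<in> carrier A2) \<and> (x \<in> carrier B1 \<longrightarrow> f x \<in> carrier B2)"
      using carA carB by blast
    show "\<forall>x\<in>F. \<forall>y\<in>F. x \<in> carrier A1 \<longrightarrow> y \<in> carrier A1 \<longrightarrow> x \<otimes>\<^bsub>A1\<^esub> y \<in> F \<longrightarrow>
        f (x \<otimes>\<^bsub>A1\<^esub> y) = f x \<otimes>\<^bsub>A2\<^esub> f y"
    proof (intro ballI impI)
      fix x y assume "x \<in> F" "y \<in> F" "x \<in> carrier A1" "y \<in> carrier A1" "x \<otimes>\<^bsub>A1\<^esub> y \<in> F"
      moreover then have "fa (x \<otimes>\<^bsub>A1\<^esub> y) = fa x \<otimes>\<^bsub>A2\<^esub> fa y" using pA unfolding lc_pres_def by simp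
      ultimately show "f (x \<otimes>\<^bsub>A1\<^esub> y) = f x \<otimes>\<^bsub>A2\<^esub> f y" using fA by simp
    qed
    show "\<forall>x\<in>F. \<forall>y\<in>F. x \<in> carrier B1 \<longrightarrow> y \<in> carrier B1 \<longrightarrow> x \<otimes>\<^bsub>B1\<^esub> y \<in> F \<longrightarrow>
        f (x \<otimes>\<^bsub>B1\<^esub> y) = f x \<otimes>\<^bsub>B2\<^esub> f y"
    proof (intro ballI impI)
      fix x y assume "x \<in> F" "y \<in> F" "x \<in> carrier B1" "y \<in> carrier B1" "x \<otimes>\<^bsub>B1\<^esub> y \<in> F"
      moreover then have "fb (x \<otimes>\<^bsub>B1\<^esub> y) = fb x \<otimes>\<^bsub>B2\<^esub> fb y" using pB unfolding lc_pres_def by simp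
      ultimately show "f (x \<otimes>\<^bsub>B1\<^esub> y) = f x \<otimes>\<^bsub>B2\<^esub> f y" using fB by simp
    qed
    have oc: "\<one>\<^bsub>C\<^esub> \<in> carrier C" using monoid.one_closed[OF group.is_monoid[OF s1.grpC]] .
    show "\<one>\<^bsub>A1\<^esub> \<in> F \<longrightarrow> f \<one>\<^bsub>A1\<^esub> = \<one>\<^bsub>A2\<^esub>"
      using fconst oc s1.oneA s2.oneA by simp
    show "\<one>\<^bsub>B1\<^esub> \<in> F \<longrightarrow> f \<one>\<^bsub>B1\<^esub> = \<one>\<^bsub>B2\<^esub>"
      using fconst oc s1.oneB s2.oneB by simp
  qed
qed



lemma one_dir:
  assumes s1: "amal C A1 B1 e1" and s2: "amal C A2 B2 e2"
    and fA: "\<forall>S. S \<subseteq> carrier A1 \<and> finite S \<longrightarrow>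
        (\<exists>T \<phi>. T \<subseteq> carrier A2 \<and> finite T \<and> lc_iso C A1 e1 A2 e2 S T \<phi>)"
    and fB: "\<forall>S. S \<subseteq> carrier B1 \<and> finite S \<longrightarrow>
        (\<exists>T \<phi>. T \<subseteq> carrier B2 \<and> finite T \<and> lc_iso C B1 e1 B2 e2 S T \<phi>)"
    and lc: "lform_consts \<phi> \<subseteq> carrier C"
    and ws: "\<forall>i. ws i \<in> lists (carrier A1 \<union> carrier B1)" and sat: "wsat C A1 B1 e1 ws \<phi>"
  shows "\<exists>ws'. (\<forall>i. ws' i \<in> lists (carrier A2 \<union> carrier B2)) \<and> wsat C A2 B2 e2 ws' \<phi>"
proof -
  interpret s1: amal C A1 B1 e1 by (rule s1)
  interpret s2: amal C A2 B2 e2 by (rule s2)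
  let ?W1 = "wd A1 B1 e1 ws"
  let ?L1 = "lists (carrier A1 \<union> carrier B1)"
  let ?L2 = "lists (carrier A2 \<union> carrier B2)"
  let ?H1 = "e1 ` carrier C" and ?H2 = "e2 ` carrier C"
  define TT where "TT = set (ftms \<phi>)"
  have TTc: "u \<in> TT \<Longrightarrow> lterm_consts u \<subseteq> carrier C" for u
    using ftms_consts[of u \<phi>] lc unfolding TT_def by blast
  have TTcl: "u \<in> TT \<Longrightarrow> set (tsubs u) \<subseteq> TT" for u
    using ftms_closed unfolding TT_def by blast
  define WS where "WS = ?W1 ` TT \<union> (\<lambda>p. ?W1 (fst p) @ winv A1 B1 (?W1 (snd p))) ` (TT \<times> TT)"
  have finWS: "finite WS" unfolding WS_def TT_def by simp
  have W1L: "u \<in> TT \<Longrightarrow> ?W1 u \<in> ?L1" for u using s1.teval_wd[OF ws TTc] by blast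
  have WSL: "w \<in> ?L1" if "w \<in> WS" for w
  proof -
    from that consider (a) u where "u \<in> TT" "w = ?W1 u"
      | (b) p where "p \<in> TT \<times> TT" "w = ?W1 (fst p) @ winv A1 B1 (?W1 (snd p))" unfolding WS_def by blast
    then show ?thesis
    proof cases
      case a then show ?thesis using W1L by simp
    next
      case b
      then have "fst p \<in> TT" "snd p \<in> TT" by auto
      then have "?W1 (fst p) \<in> ?L1" "winv A1 B1 (?W1 (snd p)) \<in> ?L1" using W1L s1.winv_L by auto
      then show ?thesis using b(2) by (simp only: append_in_lists_conv)
    qed
  qed
  have nfex: "\<exists>n. amal_rel A1 B1 w n \<and> ((\<exists>h\<in>?H1. n = [h]) \<or> nfalt A1 B1 ?H1 n)" if "w \<in> WS" for w
    using s1.nf_exists[OF WSL[OF that]] by blast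
  define nf where "nf w = (SOME n. amal_rel A1 B1 w n \<and> ((\<exists>h\<in>?H1. n = [h]) \<or> nfalt A1 B1 ?H1 n))" for w
  have nfP: "amal_rel A1 B1 w (nf w) \<and> ((\<exists>h\<in>?H1. nf w = [h]) \<or> nfalt A1 B1 ?H1 (nf w))"
    if "w \<in> WS" for w
    unfolding nf_def using someI_ex[OF nfex[OF that]] .
  have certex: "\<exists>F. finite F \<and> F \<subseteq> carrier A1 \<union> carrier B1 \<and> set w \<union> set (nf w) \<subseteq> F
     \<and> (\<forall>f. good A1 B1 A2 B2 F f \<longrightarrow> amal_rel A2 B2 (map f w) (map f (nf w)))" if "w \<in> WS" for w
    using rel_transfer[OF s1.grpA s1.grpB] nfP[OF that] by blast
  define Fw where "Fw w = (SOME F. finite F \<and> F \<subseteq> carrier A1 \<union> carrier B1 \<and> set w \<union> set (nf w) \<subseteq> F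
     \<and> (\<forall>f. good A1 B1 A2 B2 F f \<longrightarrow> amal_rel A2 B2 (map f w) (map f (nf w))))" for w
  have FwP: "finite (Fw w) \<and> Fw w \<subseteq> carrier A1 \<union> carrier B1 \<and> set w \<union> set (nf w) \<subseteq> Fw w
     \<and> (\<forall>f. good A1 B1 A2 B2 (Fw w) f \<longrightarrow> amal_rel A2 B2 (map f w) (map f (nf w)))" if "w \<in> WS" for w
    unfolding Fw_def using someI_ex[OF certex[OF that]] .
  define F where "F = \<Union> (Fw ` WS)"
  have finF: "finite F" unfolding F_def using finWS FwP by blast
  have FAB: "F \<subseteq> carrier A1 \<union> carrier B1" unfolding F_def using FwP by blast
  have FwF: "w \<in> WS \<Longrightarrow> Fw w \<subseteq> F" for w unfolding F_def by blast
  have setWS: "w \<in> WS \<Longrightarrow> set w \<subseteq> F" for w using FwP FwF by blast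
  have setnf: "w \<in> WS \<Longrightarrow> set (nf w) \<subseteq> F" for w using FwP FwF by blast
  obtain TA fa where TA: "TA \<subseteq> carrier A2" "lc_iso C A1 e1 A2 e2 (F \<inter> carrier A1) TA fa"
    using fA finF by (meson finite_Int inf_le2)
  obtain TB fb where TB: "TB \<subseteq> carrier B2" "lc_iso C B1 e1 B2 e2 (F \<inter> carrier B1) TB fb"
    using fB finF by (meson finite_Int inf_le2)
  define f where "f = (\<lambda>x. if x \<in> carrier A1 then fa x else fb x)"
  note bf = build_f[OF s1 s2 FAB TA(2) TA(1) TB(2) TB(1) f_def]
  have gF: "good A1 B1 A2 B2 F f" using bf(1) .
  have fc: "\<forall>c\<in>carrier C. e1 c \<in> F \<longrightarrow> f (e1 c) = e2 c" using bf(2) .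
  have fl: "\<forall>x\<in>F. linv A1 B1 x \<in> F \<longrightarrow> f (linv A1 B1 x) = linv A2 B2 (f x)" using bf(3) .
  have fH: "\<forall>x\<in>F. (x \<in> ?H1) = (f x \<in> ?H2)" using bf(4) .
  have fAA: "\<forall>x\<in>F. x \<notin> ?H1 \<longrightarrow> (x \<in> carrier A1) = (f x \<in> carrier A2)" using bf(5) .
  have mapL: "set w \<subseteq> F \<Longrightarrow> map f w \<in> ?L2" for w using good_lists[OF gF _ FAB] by blast
  have oc: "\<one>\<^bsub>C\<^esub> \<in> carrier C" using monoid.one_closed[OF group.is_monoid[OF s1.grpC]] .
  have tw: "(amal_rel A1 B1 w [] = amal_rel A2 B2 (map f w) [])
      \<and> ((\<exists>c\<in>carrier C. amal_rel A1 B1 w [e1 c]) = (\<exists>c\<in>carrier C. amal_rel A2 B2 (map f w) [e2 c]))"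
    if w: "w \<in> WS" for w
  proof -
    have r1: "amal_rel A1 B1 w (nf w)" using nfP[OF w] by blast
    have gw: "good A1 B1 A2 B2 (Fw w) f" using good_mono[OF gF FwF[OF w]] .
    have r2: "amal_rel A2 B2 (map f w) (map f (nf w))" using FwP[OF w] gw by blast
    have sn: "set (nf w) \<subseteq> F" using setnf[OF w] .
    show ?thesis
    proof (cases "\<exists>h\<in>?H1. nf w = [h]")
      case True
      then obtain c where c: "c \<in> carrier C" "nf w = [e1 c]" by blast
      have hF: "e1 c \<in> F" using sn c by simp
      have fh: "map f (nf w) = [e2 c]" using c hF fc by simp
      have e1c: "e1 c \<in> ?H1" and e2c: "e2 c \<in> ?H2" using c by auto
      have ch1: "(amal_rel A1 B1 w [] = (e1 c = \<one>\<^bsub>A1\<^esub>)) \<and> (\<exists>c\<in>carrier C. amal_rel A1 B1 w [e1 c])"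
        using s1.char_H[OF e1c] r1 c by simp
      have ch2: "(amal_rel A2 B2 (map f w) [] = (e2 c = \<one>\<^bsub>A2\<^esub>)) \<and> (\<exists>c\<in>carrier C. amal_rel A2 B2 (map f w) [e2 c])"
        using s2.char_H[OF e2c] r2 fh by simp
      have "(e1 c = \<one>\<^bsub>A1\<^esub>) = (c = \<one>\<^bsub>C\<^esub>)"
        using s1.oneA s1.injA c oc by (metis inj_on_eq_iff)
      moreover have "(e2 c = \<one>\<^bsub>A2\<^esub>) = (c = \<one>\<^bsub>C\<^esub>)"
        using s2.oneA s2.injA c oc by (metis inj_on_eq_iff)
      ultimately show ?thesis using ch1 ch2 by simp
    next
      case False
      then have n1: "nfalt A1 B1 ?H1 (nf w)" using nfP[OF w] by blast
      have n2: "nfalt A2 B2 ?H2 (map f (nf w))"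
      proof -
        have a: "nf w \<noteq> []" "set (nf w) \<subseteq> (carrier A1 \<union> carrier B1) - ?H1" "altw A1 (nf w)"
          using n1 unfolding nfalt_def by auto
        have "\<forall>x\<in>set (nf w). f x \<in> (carrier A2 \<union> carrier B2) - ?H2"
        proof
          fix x assume x: "x \<in> set (nf w)"
          have xF: "x \<in> F" using x sn by blast
          have "f x \<in> carrier A2 \<union> carrier B2" using mapL[OF sn] x by (simp add: in_lists_conv_set)
          moreover have "f x \<notin> ?H2" using fH xF a(2) x by blast
          ultimately show "f x \<in> (carrier A2 \<union> carrier B2) - ?H2" by blast
        qed
        moreover have "\<forall>x\<in>set (nf w). (f x \<in> carrier A2) = (x \<in> carrier A1)"
          using fAA a(2) sn by blast
        ultimately show ?thesis using a altw_map[OF a(3)] unfolding nfalt_def by auto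
      qed
      show ?thesis using s1.char_alt[OF n1 r1] s2.char_alt[OF n2 r2] by blast
    qed
  qed
  define ws' where "ws' i = (if LVar i \<in> TT then map f (ws i) else [])" for i
  have ws'L: "\<forall>i. ws' i \<in> ?L2"
  proof
    fix i show "ws' i \<in> ?L2"
    proof (cases "LVar i \<in> TT")
      case True
      then have "ws i \<in> WS" unfolding WS_def by force
      then show ?thesis using True mapL setWS unfolding ws'_def by simp
    qed (simp add: ws'_def)
  qed
  let ?W2 = "wd A2 B2 e2 ws'"
  have winvF: "map f (winv A1 B1 (?W1 t)) = winv A2 B2 (map f (?W1 t))" if t: "t \<in> TT" for t
  proof (rule winv_map, rule ballI)
    fix x assume x: "x \<in> set (?W1 t)"
    have "?W1 t @ winv A1 B1 (?W1 t) \<in> WS" using t unfolding WS_def by force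
    then have s: "set (?W1 t @ winv A1 B1 (?W1 t)) \<subseteq> F" using setWS by blast
    then have "x \<in> F" "linv A1 B1 x \<in> F" using x by (auto simp: winv_def)
    then show "f (linv A1 B1 x) = linv A2 B2 (f x)" using fl by blast
  qed
  have W2eq: "u \<in> TT \<Longrightarrow> ?W2 u = map f (?W1 u)" for u
  proof (induction u)
    case (LVar i) then show ?case by (simp add: ws'_def)
  next
    case (LConst c)
    have c: "c \<in> carrier C" using TTc[OF LConst] by simp
    have "[e1 c] \<in> WS" using LConst unfolding WS_def by force
    then have "e1 c \<in> F" using setWS by fastforce
    then show ?case using fc c by simp
  next
    case (LMul s t)
    have "s \<in> TT" "t \<in> TT" using TTcl[OF LMul.prems] tsubs_self[of s] tsubs_self[of t] by auto
    then show ?case using LMul.IH by simp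
  next
    case (LInv t)
    have t: "t \<in> TT" using TTcl[OF LInv.prems] tsubs_self[of t] by auto
    then show ?case using LInv.IH winvF[OF t] by simp
  qed
  have main: "set (ftms \<psi>) \<subseteq> TT \<Longrightarrow> wsat C A1 B1 e1 ws \<psi> = wsat C A2 B2 e2 ws' \<psi>" for \<psi>
  proof (induction \<psi>)
    case (LEq s t)
    have st: "s \<in> TT" "t \<in> TT" using LEq tsubs_self[of s] tsubs_self[of t] by auto
    let ?w = "?W1 s @ winv A1 B1 (?W1 t)"
    have wWS: "?w \<in> WS" using st unfolding WS_def by force
    have l1: "amal_rel A1 B1 (?W1 s) (?W1 t) = amal_rel A1 B1 ?w []"
      using s1.K3 W1L st by blast
    have ms: "?W1 s \<in> WS" "?W1 t \<in> WS" using st unfolding WS_def by auto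
    have l2s: "?W2 s \<in> ?L2" "?W2 t \<in> ?L2" using W2eq st mapL setWS ms by auto
    have l2: "amal_rel A2 B2 (?W2 s) (?W2 t) = amal_rel A2 B2 (?W2 s @ winv A2 B2 (?W2 t)) []"
      using s2.K3 l2s by blast
    have "map f ?w = ?W2 s @ winv A2 B2 (?W2 t)" using W2eq st winvF[OF st(2)] by simp
    then show ?case using l1 l2 tw[OF wWS] by simp
  next
    case (LDelta t)
    have t: "t \<in> TT" using LDelta tsubs_self[of t] by auto
    have wWS: "?W1 t \<in> WS" using t unfolding WS_def by force
    show ?case using tw[OF wWS] W2eq[OF t] by simp
  qed auto
  have "wsat C A2 B2 e2 ws' \<phi>" using main[of \<phi>] sat unfolding TT_def by simp
  then show ?thesis using ws'L by blast
qed



lemma teval_indep: "lterm_consts t = {} \<Longrightarrow> teval G e \<sigma> t = teval G e' \<sigma> t"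
  by (induction t) auto

lemma fsat_indep: "lform_consts \<phi> = {} \<Longrightarrow> \<not> lform_has_delta \<phi> \<Longrightarrow> fsat G e D \<sigma> \<phi> = fsat G e' D' \<sigma> \<phi>"
  by (induction \<phi>) (auto simp: teval_indep[of _ G e \<sigma> e'])

lemma exist_dir:
  assumes s1: "amal C A1 B1 e1" and s2: "amal C A2 B2 e2"
    and eA: "lc_fin_equiv C A1 e1 A2 e2" and eB: "lc_fin_equiv C B1 e1 B2 e2"
    and lc: "lform_consts \<phi> \<subseteq> carrier C"
    and h: "ex_holds C (amal_prod A1 B1) (amal_emb A1 B1 e1) \<phi>"
  shows "ex_holds C (amal_prod A2 B2) (amal_emb A2 B2 e2) \<phi>"
proof -
  interpret s1: amal C A1 B1 e1 by (rule s1)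
  interpret s2: amal C A2 B2 e2 by (rule s2)
  obtain ws where ws: "\<forall>i. ws i \<in> lists (carrier A1 \<union> carrier B1)" "wsat C A1 B1 e1 ws \<phi>"
    using s1.ex_holds_iff[OF lc] h by blast
  have fA: "\<forall>S. S \<subseteq> carrier A1 \<and> finite S \<longrightarrow>
        (\<exists>T \<phi>. T \<subseteq> carrier A2 \<and> finite T \<and> lc_iso C A1 e1 A2 e2 S T \<phi>)"
    using eA unfolding lc_fin_equiv_def by (elim conjE) assumption
  have fB: "\<forall>S. S \<subseteq> carrier B1 \<and> finite S \<longrightarrow>
        (\<exists>T \<phi>. T \<subseteq> carrier B2 \<and> finite T \<and> lc_iso C B1 e1 B2 e2 S T \<phi>)"
    using eB unfolding lc_fin_equiv_def by (elim conjE) assumption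
  obtain ws' where "\<forall>i. ws' i \<in> lists (carrier A2 \<union> carrier B2)" "wsat C A2 B2 e2 ws' \<phi>"
    using one_dir[OF s1 s2 fA fB lc ws] by blast
  then show ?thesis using s2.ex_holds_iff[OF lc] by blast
qed

lemma fin_equiv_sym: "lc_fin_equiv C G e H e' \<Longrightarrow> lc_fin_equiv C H e' G e"
  unfolding lc_fin_equiv_def by blast

theorem mainTheorem7:
  fixes C :: "'c monoid"
    and A1 B1 :: "'a monoid" and e1 :: "'c \<Rightarrow> 'a"
    and A2 B2 :: "'b monoid" and e2 :: "'c \<Rightarrow> 'b"
  assumes "group C" and "carrier C \<noteq> {\<one>\<^bsub>C\<^esub>}"
    and "is_cgroup C A1 e1" and "is_cgroup C B1 e1"
    and "is_cgroup C A2 e2" and "is_cgroup C B2 e2"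
    and "carrier A1 \<inter> carrier B1 = e1 ` carrier C"
    and "carrier A2 \<inter> carrier B2 = e2 ` carrier C"
    and "lc_fin_equiv C A1 e1 A2 e2"
    and "lc_fin_equiv C B1 e1 B2 e2"
  shows "lc_exist_equiv C (amal_prod A1 B1) (amal_emb A1 B1 e1) (amal_prod A2 B2) (amal_emb A2 B2 e2)
       \<and> group_exist_equiv C (amal_prod A1 B1) (amal_prod A2 B2)"
proof -
  have s1: "amal C A1 B1 e1" using assms by (simp add: amal_def)
  have s2: "amal C A2 B2 e2" using assms by (simp add: amal_def)
  have lce: "lc_exist_equiv C (amal_prod A1 B1) (amal_emb A1 B1 e1) (amal_prod A2 B2) (amal_emb A2 B2 e2)"
    unfolding lc_exist_equiv_def
  proof (intro allI impI iffI)
    fix \<phi> :: "'c lform" assume lc: "is_lc_form C \<phi>"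
    then have lc': "lform_consts \<phi> \<subseteq> carrier C" by (simp add: is_lc_form_def)
    {
      assume "ex_holds C (amal_prod A1 B1) (amal_emb A1 B1 e1) \<phi>"
      then show "ex_holds C (amal_prod A2 B2) (amal_emb A2 B2 e2) \<phi>"
        using exist_dir[OF s1 s2 assms(9) assms(10) lc'] by blast
    }
    {
      assume "ex_holds C (amal_prod A2 B2) (amal_emb A2 B2 e2) \<phi>"
      then show "ex_holds C (amal_prod A1 B1) (amal_emb A1 B1 e1) \<phi>"
        using exist_dir[OF s2 s1 fin_equiv_sym[OF assms(9)] fin_equiv_sym[OF assms(10)] lc'] by blast
    }
  qed
  have gr: "\<And>G :: ('x, 'y) monoid_scheme. \<And>e :: 'c \<Rightarrow> 'x. \<And>\<phi>. is_group_form \<phi> \<Longrightarrow>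
     (\<exists>\<sigma>. (\<forall>i. \<sigma> i \<in> carrier G) \<and> fsat G (\<lambda>_. undefined) {} \<sigma> \<phi>) = ex_holds C G e \<phi>"
    unfolding ex_holds_def is_group_form_def using fsat_indep by metis
  have "group_exist_equiv C (amal_prod A1 B1) (amal_prod A2 B2)"
    unfolding group_exist_equiv_def
  proof (intro allI impI)
    fix \<phi> :: "'c lform" assume g: "is_group_form \<phi>"
    then have "is_lc_form C \<phi>" by (simp add: is_group_form_def is_lc_form_def)
    then have "ex_holds C (amal_prod A1 B1) (amal_emb A1 B1 e1) \<phi> = ex_holds C (amal_prod A2 B2) (amal_emb A2 B2 e2) \<phi>"
      using lce unfolding lc_exist_equiv_def by blast
    then show "(\<exists>\<sigma>. (\<forall>i. \<sigma> i \<in> carrier (amal_prod A1 B1)) \<and> fsat (amal_prod A1 B1) (\<lambda>_. undefined) {} \<sigma> \<phi>) =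
        (\<exists>\<sigma>. (\<forall>i. \<sigma> i \<in> carrier (amal_prod A2 B2)) \<and> fsat (amal_prod A2 B2) (\<lambda>_. undefined) {} \<sigma> \<phi>)"
      using gr[OF g, of "amal_prod A1 B1" "amal_emb A1 B1 e1"] gr[OF g, of "amal_prod A2 B2" "amal_emb A2 B2 e2"] by simp
  qed
  then show ?thesis using lce by blast
qed


end
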